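(* Let $n\geq1$ and let $G$ be any of the game-graphs $G_n(\mathbb T\ltimes\mathbb N^2)$, $G'_n(\mathbb T\rtimes\mathbb N^2)$, $G_n(\mathbb N^2\ltimes\mathbb N^2)$, $G'_n(\mathbb N^2\rtimes\mathbb N^2)$. Let $x:\partial G\to\{0,1\}$ assign a winner to each possible outcome ($0$ = Alice wins, $1$ = Bob wins). If Alice has a winning strategy given $x$, then a Toom cycle is present in $(G,x)$.
   Context: **Decision graphs.** - $\mathbb T$ is the set of finite words over $\{1,2\}$ with root $\varnothing$, edges $\mathbf i\to\mathbf ik$ ($k\in\{1,2\}$), and $|\mathbf i|$ = length. - $\mathbb N^2$ has root $(0,0)$ and edges $(i,j)\to(i,j)1:=(i+1,j)$ and $(i,j)\to(i,j)2:=(i,j+1)$, with $|(i,j)|=i+j$. **Products.** For $D^1,D^2\in\{\mathbb T,\mathbb N^2\}$: - $D^1\ltimes D^2$ has as vertices the pairs $(a,b)$ with $|a|=|b|$ (level $2|b|$) or $|a|=|b|+1$ (level $2|b|+1$), root $(0,0)$, edges $(a,b)\to(ak,b)$ from even levels and $(a,b)\to(a,bk)$ from odd levels. - $D^1\rtimes D^2$ has as vertices the pairs $(a,b)$ with $|a|=|b|$ (level $2|a|$) or $|b|=|a|+1$ (level $2|a|+1$), with edges $(a,b)\to(a,bk)$ from even levels and $(a,b)\to(ak,b)$ from odd levels. **Game-graphs.** $G_n(D)$ (resp. $G'_n(D)$) is the restriction to levels $\leq n$, with root $0$ and possible outcomes $\partial G$ = level $n$. Interior vertices at even levels are Alice's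 turn (resp. Bob's turn) and those at odd levels are Bob's (resp. Alice's). In all four cases Alice's moves change $a$ and Bob's change $b$. Alice has a winning strategy given $x$ if she has a strategy (choice of out-neighbour at each of her vertices) such that whatever Bob plays the outcome $v$ has $x(v)=0$. **Edge classes.** Let $\mathring G$ be the non-outcome vertices. Let $\vec A$ be the set of edges $((a,b),(ak,b))$ from Alice-turn vertices, and $\vec B_k$ the set of edges $((a,b),(a,bk))$ from Bob-turn vertices. **Walks and step types.** A walk is $\psi=\psi_0\cdots\psi_l$ with each $(\psi_{k-1},\psi_k)$ an edge or a reversed edge. The $k$-th step is: - su if $(\psi_{k-1},\psi_k)\in\vec A$, and sd if $(\psi_k,\psi_{k-1})\in\vec A$; - lu if $(\psi_{k-1},\psi_k)\in\vec B_2$, and ld if $(\psi_k,\psi_{k-1})\in\vec B_1$; - ru if $(\psi_{k-1},\psi_k)\in\vec B_1$, and rd if $(\psi_k,\psi_{k-1})\in\vec B_2$. Types su, lu, ru are "up" and sd, ld, rd are "down". Let - $N_\uparrow=\{0\}\cup\{0<k<l:$ steps $k,k+1$ both up$\}$, - $N_\circ=\{0<k<l:$ step $k$ down, step $k+1$ up$\}$, - $N_\downarrow=\{l\}\cup\{0<k<l:$ steps $k,k+1$ both down$\}$, - $N_\ast=\{0<k<l:$ step $k$ up, step $k+1$ down$\}$. **Toom cycle.** A Toom cycle is a walk with $l\geq2$ satisfying all of the following. - $\psi_0=\psi_l=0$; the first step is su or ru; the last step is sd or rd. - For $0<k<l$ with $\psi_k\in\mathring G$, the only allowed (step $k$ $\to$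 step $k+1$) combinations are su$\to$ru, ru$\to$su, lu$\to$su, sd$\to$rd or ld, rd$\to$sd, ld$\to$lu. - For $\psi_k\in\partial G$, the only allowed combinations are su$\to$sd, ru$\to$rd or ld, lu$\to$rd or ld. - (i) $\psi_k\neq\psi_m$ for distinct $k,m\in N_\ast$. - (ii) If $\psi_k=\psi_m$ with $k\in N_s$, $m\in N_t$, $s,t\in\{\uparrow,\circ,\downarrow\}$ and $s\leq t$ in the order $\uparrow<\circ<\downarrow$, then $k\leq m$. **Presence.** A Toom cycle is present in $(G,x)$ if $x(\psi_k)=0$ for all $k$ with $\psi_k\in\partial G$. *)

theory Defs
  imports Main
begin

record 'a dgraph =
  dv :: "'a set"
  droot :: 'a
  dch :: "'a \<Rightarrow> nat \<Rightarrow> 'a"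
  dlen :: "'a \<Rightarrow> nat"

definition Tree :: "nat list dgraph" where
  "Tree = \<lparr>dv = {w. set w \<subseteq> {1,2}}, droot = [], dch = (\<lambda>w k. w @ [k]), dlen = length\<rparr>"

definition N2 :: "(nat \<times> nat) dgraph" where
  "N2 = \<lparr>dv = UNIV, droot = (0,0),
         dch = (\<lambda>(i,j) k. if k = 1 then (i+1,j) else (i,j+1)),
         dlen = (\<lambda>(i,j). i + j)\<rparr>"

definition plev :: "'a dgraph \<Rightarrow> 'b dgraph \<Rightarrow> 'a \<times> 'b \<Rightarrow> nat" where
  "plev D1 D2 v = dlen D1 (fst v) + dlen D2 (snd v)"

text \<open>Left product D1 \<ltimes> D2 (lt = True) and right product D1 \<rtimes> D2 (lt = False).\<close>
definition pvert :: "bool \<Rightarrow> 'a dgraph \<Rightarrow> 'b dgraph \<Rightarrow> ('a \<times> 'b) set" where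
  "pvert lt D1 D2 = {(a,b). a \<in> dv D1 \<and> b \<in> dv D2 \<and>
      (dlen D1 a = dlen D2 b \<or>
       (if lt then dlen D1 a = dlen D2 b + 1 else dlen D2 b = dlen D1 a + 1))}"

text \<open>Edges changing the first coordinate a (these leave the "a-move" vertices).
  In D1 \<ltimes> D2 these leave even levels (|a| = |b|), in D1 \<rtimes> D2 odd levels (|b| = |a|+1).\<close>
definition pEa :: "bool \<Rightarrow> 'a dgraph \<Rightarrow> 'b dgraph \<Rightarrow> (('a \<times> 'b) \<times> ('a \<times> 'b)) set" where
  "pEa lt D1 D2 = {((a,b), (dch D1 a k, b)) | a b k. (a,b) \<in> pvert lt D1 D2 \<and> k \<in> {1,2} \<and>
      (if lt then dlen D1 a = dlen D2 b else dlen D2 b = dlen D1 a + 1)}"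

definition pEb :: "bool \<Rightarrow> 'a dgraph \<Rightarrow> 'b dgraph \<Rightarrow> nat \<Rightarrow> (('a \<times> 'b) \<times> ('a \<times> 'b)) set" where
  "pEb lt D1 D2 k = {((a,b), (a, dch D2 b k)) | a b. (a,b) \<in> pvert lt D1 D2 \<and> k \<in> {1,2} \<and>
      (if lt then dlen D1 a = dlen D2 b + 1 else dlen D1 a = dlen D2 b)}"

definition pedges :: "bool \<Rightarrow> 'a dgraph \<Rightarrow> 'b dgraph \<Rightarrow> (('a \<times> 'b) \<times> ('a \<times> 'b)) set" where
  "pedges lt D1 D2 = pEa lt D1 D2 \<union> pEb lt D1 D2 1 \<union> pEb lt D1 D2 2"

record 'v game =
  gV :: "'v set"
  groot :: 'v
  gOut :: "'v set"
  gAlice :: "'v set"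
  gBob :: "'v set"
  gE :: "('v \<times> 'v) set"
  gA :: "('v \<times> 'v) set"
  gB :: "nat \<Rightarrow> ('v \<times> 'v) set"

text \<open>The game-graph obtained by restricting the product (lt selects \<ltimes> / \<rtimes>) to levels
  at most n; primed = False gives G_n (Alice moves at even levels), primed = True gives G'_n
  (Alice moves at odd levels).\<close>
definition mkgame :: "bool \<Rightarrow> bool \<Rightarrow> 'a dgraph \<Rightarrow> 'b dgraph \<Rightarrow> nat \<Rightarrow> ('a \<times> 'b) game" where
  "mkgame lt primed D1 D2 n =
    (let V = {v \<in> pvert lt D1 D2. plev D1 D2 v \<le> n};
         Al = {v \<in> V. plev D1 D2 v < n \<and> (even (plev D1 D2 v) \<longleftrightarrow> \<not> primed)};
         Bo = {v \<in> V. plev D1 D2 v < n \<and> (even (plev D1 D2 v) \<longleftrightarrow> primed)};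
         E = {(u,w) \<in> pedges lt D1 D2. u \<in> V \<and> w \<in> V}
     in \<lparr>gV = V, groot = (droot D1, droot D2),
         gOut = {v \<in> V. plev D1 D2 v = n},
         gAlice = Al, gBob = Bo, gE = E,
         gA = {((a,b), (dch D1 a k, b)) | a b k. k \<in> {1,2} \<and> (a,b) \<in> Al \<and>
                 ((a,b), (dch D1 a k, b)) \<in> E},
         gB = (\<lambda>k. {((a,b), (a, dch D2 b k)) | a b. k \<in> {1,2} \<and> (a,b) \<in> Bo \<and>
                 ((a,b), (a, dch D2 b k)) \<in> E})\<rparr>)"

inductive_set reach :: "'v game \<Rightarrow> ('v \<Rightarrow> 'v) \<Rightarrow> 'v set" for G \<sigma> where
  root: "groot G \<in> reach G \<sigma>"
| alice: "v \<in> reach G \<sigma> \<Longrightarrow> v \<in> gAlice G \<Longrightarrow> \<sigma> v \<in> reach G \<sigma>"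
| bob: "v \<in> reach G \<sigma> \<Longrightarrow> v \<in> gBob G \<Longrightarrow> (v, w) \<in> gE G \<Longrightarrow> w \<in> reach G \<sigma>"

definition alice_wins :: "'v game \<Rightarrow> ('v \<Rightarrow> nat) \<Rightarrow> bool" where
  "alice_wins G x \<longleftrightarrow> (\<exists>\<sigma>. (\<forall>v \<in> gAlice G. (v, \<sigma> v) \<in> gE G) \<and>
                          (\<forall>v \<in> reach G \<sigma>. v \<in> gOut G \<longrightarrow> x v = 0))"

datatype stype = SU | SD | LU | LD | RU | RD

definition is_up :: "stype \<Rightarrow> bool" where
  "is_up t \<longleftrightarrow> t \<in> {SU, LU, RU}"

definition is_down :: "stype \<Rightarrow> bool" where
  "is_down t \<longleftrightarrow> t \<in> {SD, LD, RD}"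

fun steptype :: "'v game \<Rightarrow> 'v \<Rightarrow> 'v \<Rightarrow> stype \<Rightarrow> bool" where
  "steptype G u w SU \<longleftrightarrow> (u, w) \<in> gA G"
| "steptype G u w SD \<longleftrightarrow> (w, u) \<in> gA G"
| "steptype G u w LU \<longleftrightarrow> (u, w) \<in> gB G 2"
| "steptype G u w LD \<longleftrightarrow> (w, u) \<in> gB G 1"
| "steptype G u w RU \<longleftrightarrow> (u, w) \<in> gB G 1"
| "steptype G u w RD \<longleftrightarrow> (w, u) \<in> gB G 2"

text \<open>A walk is psi_0 ... psi_l given as a list of length l+1.
  step G psi k t: the k-th step (1 \<le> k \<le> l) has type t.\<close>
definition step :: "'v game \<Rightarrow> 'v list \<Rightarrow> nat \<Rightarrow> stype \<Rightarrow> bool" where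
  "step G \<psi> k t \<longleftrightarrow> 1 \<le> k \<and> k < length \<psi> \<and> steptype G (\<psi> ! (k - 1)) (\<psi> ! k) t"

definition step_up :: "'v game \<Rightarrow> 'v list \<Rightarrow> nat \<Rightarrow> bool" where
  "step_up G \<psi> k \<longleftrightarrow> (\<exists>t. step G \<psi> k t \<and> is_up t)"

definition step_down :: "'v game \<Rightarrow> 'v list \<Rightarrow> nat \<Rightarrow> bool" where
  "step_down G \<psi> k \<longleftrightarrow> (\<exists>t. step G \<psi> k t \<and> is_down t)"

definition is_walk :: "'v game \<Rightarrow> 'v list \<Rightarrow> bool" where
  "is_walk G \<psi> \<longleftrightarrow> \<psi> \<noteq> [] \<and>
     (\<forall>k. 1 \<le> k \<and> k < length \<psi> \<longrightarrow>
        (\<psi> ! (k - 1), \<psi> ! k) \<in> gE G \<or> (\<psi> ! k, \<psi> ! (k - 1)) \<in> gE G)"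

text \<open>Index sets; the classes are indexed 0 = up, 1 = circ, 2 = down, 3 = ast.
  Here l = length psi - 1.\<close>
definition Nset :: "'v game \<Rightarrow> 'v list \<Rightarrow> nat \<Rightarrow> nat set" where
  "Nset G \<psi> s = (let l = length \<psi> - 1 in
     if s = 0 then {0} \<union> {k. 0 < k \<and> k < l \<and> step_up G \<psi> k \<and> step_up G \<psi> (k+1)}
     else if s = 1 then {k. 0 < k \<and> k < l \<and> step_down G \<psi> k \<and> step_up G \<psi> (k+1)}
     else if s = 2 then {l} \<union> {k. 0 < k \<and> k < l \<and> step_down G \<psi> k \<and> step_down G \<psi> (k+1)}
     else {k. 0 < k \<and> k < l \<and> step_up G \<psi> k \<and> step_down G \<psi> (k+1)})"

definition interior_ok :: "stype \<Rightarrow> stype \<Rightarrow> bool" where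
  "interior_ok t1 t2 \<longleftrightarrow> (t1, t2) \<in> {(SU, RU), (RU, SU), (LU, SU), (SD, RD), (SD, LD),
                                        (RD, SD), (LD, LU)}"

definition boundary_ok :: "stype \<Rightarrow> stype \<Rightarrow> bool" where
  "boundary_ok t1 t2 \<longleftrightarrow> (t1, t2) \<in> {(SU, SD), (RU, RD), (RU, LD), (LU, RD), (LU, LD)}"

definition toom_cycle :: "'v game \<Rightarrow> 'v list \<Rightarrow> bool" where
  "toom_cycle G \<psi> \<longleftrightarrow> (let l = length \<psi> - 1 in
     is_walk G \<psi> \<and> 2 \<le> l \<and>
     \<psi> ! 0 = groot G \<and> \<psi> ! l = groot G \<and>
     (step G \<psi> 1 SU \<or> step G \<psi> 1 RU) \<and>
     (step G \<psi> l SD \<or> step G \<psi> l RD) \<and>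
     (\<forall>k t1 t2. 0 < k \<and> k < l \<and> \<psi> ! k \<in> gV G - gOut G \<and>
         step G \<psi> k t1 \<and> step G \<psi> (k+1) t2 \<longrightarrow> interior_ok t1 t2) \<and>
     (\<forall>k t1 t2. 0 < k \<and> k < l \<and> \<psi> ! k \<in> gOut G \<and>
         step G \<psi> k t1 \<and> step G \<psi> (k+1) t2 \<longrightarrow> boundary_ok t1 t2) \<and>
     (\<forall>k \<in> Nset G \<psi> 3. \<forall>m \<in> Nset G \<psi> 3. k \<noteq> m \<longrightarrow> \<psi> ! k \<noteq> \<psi> ! m) \<and>
     (\<forall>s t k m. s \<le> t \<and> t \<le> 2 \<and> k \<in> Nset G \<psi> s \<and> m \<in> Nset G \<psi> t \<and> \<psi> ! k = \<psi> ! m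
         \<longrightarrow> k \<le> m))"

definition toom_present :: "'v game \<Rightarrow> ('v \<Rightarrow> nat) \<Rightarrow> bool" where
  "toom_present G x \<longleftrightarrow> (\<exists>\<psi>. toom_cycle G \<psi> \<and>
      (\<forall>k < length \<psi>. \<psi> ! k \<in> gOut G \<longrightarrow> x (\<psi> ! k) = 0))"

end

theory Submission
  imports Defs
begin

locale tg =
  fixes lt :: bool and D1 :: "'a dgraph" and D2 :: "'b dgraph"
  assumes r1: "droot D1 \<in> dv D1" and r2: "droot D2 \<in> dv D2"
  and l1: "dlen D1 (droot D1) = 0" and l2: "dlen D2 (droot D2) = 0"
  and ch1: "\<And>a k. a \<in> dv D1 \<Longrightarrow> k \<in> {1,2} \<Longrightarrow> dch D1 a k \<in> dv D1 \<and> dlen D1 (dch D1 a k) = Suc (dlen D1 a)"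
  and ch2: "\<And>b k. b \<in> dv D2 \<Longrightarrow> k \<in> {1,2} \<Longrightarrow> dch D2 b k \<in> dv D2 \<and> dlen D2 (dch D2 b k) = Suc (dlen D2 b)"
  and d12: "\<And>b. b \<in> dv D2 \<Longrightarrow> dch D2 b 1 \<noteq> dch D2 b 2"
  and inj2: "\<And>b b' k. b \<in> dv D2 \<Longrightarrow> b' \<in> dv D2 \<Longrightarrow> k \<in> {1,2} \<Longrightarrow> dch D2 b k = dch D2 b' k \<Longrightarrow> b = b'"
begin

abbreviation "H n \<equiv> mkgame lt (\<not>lt) D1 D2 n"
abbreviation "lev \<equiv> plev D1 D2"
abbreviation "PV \<equiv> pvert lt D1 D2"

lemma PV_iff: "(a,b) \<in> PV \<longleftrightarrow> a \<in> dv D1 \<and> b \<in> dv D2 \<and>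
   (dlen D1 a = dlen D2 b \<or> (if lt then dlen D1 a = dlen D2 b + 1 else dlen D2 b = dlen D1 a + 1))"
  by (simp add: pvert_def)

lemma lev_eq: "lev (a,b) = dlen D1 a + dlen D2 b" by (simp add: plev_def)

lemma gV: "gV (H n) = {v \<in> PV. lev v \<le> n}" by (simp add: mkgame_def Let_def)
lemma gOut: "gOut (H n) = {v \<in> PV. lev v = n}" by (auto simp add: mkgame_def Let_def)
lemma gAlice: "gAlice (H n) = {v \<in> PV. lev v < n \<and> (even (lev v) = lt)}" by (auto simp add: mkgame_def Let_def)
lemma gBob: "gBob (H n) = {v \<in> PV. lev v < n \<and> (even (lev v) = (\<not>lt))}" by (auto simp add: mkgame_def Let_def)
lemma gE: "gE (H n) = {(u,w). (u,w) \<in> pedges lt D1 D2 \<and> u \<in> PV \<and> lev u \<le> n \<and> w \<in> PV \<and> lev w \<le> n}"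
  by (auto simp add: mkgame_def Let_def)
lemma groot: "groot (H n) = (droot D1, droot D2)" by (simp add: mkgame_def Let_def)

lemma gA_iff: "(u,w) \<in> gA (H n) \<longleftrightarrow> (\<exists>k\<in>{1,2}. w = (dch D1 (fst u) k, snd u)) \<and> u \<in> gAlice (H n) \<and> (u,w) \<in> gE (H n)"
  apply (cases u)
  apply (simp only: mkgame_def Let_def game.simps)
  apply auto
  done

lemma gB_iff: "(u,w) \<in> gB (H n) k \<longleftrightarrow> k \<in> {1,2} \<and> w = (fst u, dch D2 (snd u) k) \<and> u \<in> gBob (H n) \<and> (u,w) \<in> gE (H n)"
  apply (cases u)
  apply (simp only: mkgame_def Let_def game.simps)
  apply auto
  done

lemma pedges_lev: assumes "(u,w) \<in> pedges lt D1 D2"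
  shows "u \<in> PV \<and> w \<in> PV \<and> lev w = Suc (lev u)"
  using assms unfolding pedges_def pEa_def pEb_def
  apply (auto simp: pvert_def plev_def ch1 ch2 split: if_splits)
  done

lemma pEa_par: "(u,w) \<in> pEa lt D1 D2 \<Longrightarrow> even (lev u) = lt \<and> (\<exists>k\<in>{1,2}. w = (dch D1 (fst u) k, snd u))"
  unfolding pEa_def by (auto simp: plev_def split: if_splits)

lemma pEb_par: "(u,w) \<in> pEb lt D1 D2 k \<Longrightarrow> even (lev u) = (\<not>lt) \<and> k \<in> {1,2} \<and> w = (fst u, dch D2 (snd u) k)"
  unfolding pEb_def by (auto simp: plev_def split: if_splits)

lemma E_lev: "(u,w) \<in> gE (H n) \<Longrightarrow> u \<in> gV (H n) \<and> w \<in> gV (H n) \<and> lev w = Suc (lev u) \<and> lev u < n"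
  using pedges_lev[of u w] by (auto simp: gE gV)

lemma A_E: "(u,w) \<in> gA (H n) \<Longrightarrow> (u,w) \<in> gE (H n) \<and> u \<in> gAlice (H n)"
  by (simp add: gA_iff)

lemma B_E: "(u,w) \<in> gB (H n) k \<Longrightarrow> (u,w) \<in> gE (H n) \<and> u \<in> gBob (H n) \<and> k \<in> {1,2} \<and> w = (fst u, dch D2 (snd u) k)"
  unfolding gB_iff by blast

lemma E_cases: assumes "(u,w) \<in> gE (H n)"
  shows "(u,w) \<in> gA (H n) \<or> (u,w) \<in> gB (H n) 1 \<or> (u,w) \<in> gB (H n) 2"
proof -
  have e: "(u,w) \<in> pedges lt D1 D2" and uv: "u \<in> PV" and lv: "lev u < n"
    using assms E_lev[OF assms] by (auto simp: gE gV)
  show ?thesis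
  proof (cases "(u,w) \<in> pEa lt D1 D2")
    case True
    then have "u \<in> gAlice (H n)" using pEa_par[OF True] uv lv by (simp add: gAlice)
    then show ?thesis using pEa_par[OF True] assms by (simp add: gA_iff)
  next
    case False
    then obtain k where k: "(u,w) \<in> pEb lt D1 D2 k" "k \<in> {1,2}" using e unfolding pedges_def by auto
    then have "u \<in> gBob (H n)" using pEb_par[OF k(1)] uv lv by (simp add: gBob)
    then have "(u,w) \<in> gB (H n) k" using pEb_par[OF k(1)] assms by (simp add: gB_iff)
    then show ?thesis using k(2) by auto
  qed
qed

lemma AB_disj: "u \<in> gAlice (H n) \<Longrightarrow> u \<in> gBob (H m) \<Longrightarrow> False"
  unfolding gAlice gBob by simp

lemma B12: assumes "(p,w) \<in> gB (H n) 1" "(p,w) \<in> gB (H m) 2" shows False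
proof -
  have "p \<in> PV" using assms(1) unfolding gB_iff gBob by simp
  then have "snd p \<in> dv D2" by (cases p) (simp add: PV_iff)
  moreover have "dch D2 (snd p) 1 = dch D2 (snd p) 2" using assms unfolding gB_iff by auto
  ultimately show False using d12 by blast
qed

lemma Bpar: assumes "(p,w) \<in> gB (H n) k" "(p',w) \<in> gB (H m) k" shows "p = p'"
proof -
  have "p \<in> PV" "p' \<in> PV" using assms unfolding gB_iff gBob by simp_all
  then have "snd p \<in> dv D2" "snd p' \<in> dv D2" by (cases p, simp add: PV_iff, cases p', simp add: PV_iff)
  moreover have "dch D2 (snd p) k = dch D2 (snd p') k" "fst p = fst p'" "k \<in> {1,2}" using assms unfolding gB_iff by auto
  ultimately show ?thesis using inj2 by (metis prod.expand)
qed

lemma mono_V: "v \<in> gV (H n) \<Longrightarrow> v \<in> gV (H (Suc n))" by (simp add: gV)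
lemma mono_Al: "v \<in> gAlice (H n) \<Longrightarrow> v \<in> gAlice (H (Suc n))" by (simp add: gAlice)
lemma mono_Bo: "v \<in> gBob (H n) \<Longrightarrow> v \<in> gBob (H (Suc n))" by (simp add: gBob)
lemma mono_E: "(u,w) \<in> gE (H n) \<Longrightarrow> (u,w) \<in> gE (H (Suc n))" by (simp add: gE)
lemma mono_A: "(u,w) \<in> gA (H n) \<Longrightarrow> (u,w) \<in> gA (H (Suc n))"
  using mono_E[of u w n] mono_Al[of u n] unfolding gA_iff by blast
lemma mono_B: "(u,w) \<in> gB (H n) k \<Longrightarrow> (u,w) \<in> gB (H (Suc n)) k"
  using mono_E[of u w n] mono_Bo[of u n] unfolding gB_iff by blast

lemma restr_E: "(u,w) \<in> gE (H (Suc n)) \<Longrightarrow> lev w \<le> n \<Longrightarrow> (u,w) \<in> gE (H n)"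
  using E_lev[of u w "Suc n"] by (simp add: gE)
lemma restr_A: assumes "(u,w) \<in> gA (H (Suc n))" "lev w \<le> n" shows "(u,w) \<in> gA (H n)"
proof -
  have e: "(u,w) \<in> gE (H (Suc n))" using assms unfolding gA_iff by blast
  have "u \<in> gAlice (H n)" using assms E_lev[OF e] unfolding gA_iff by (auto simp: gAlice)
  then show ?thesis using assms restr_E[OF e assms(2)] unfolding gA_iff by blast
qed
lemma restr_B: assumes "(u,w) \<in> gB (H (Suc n)) k" "lev w \<le> n" shows "(u,w) \<in> gB (H n) k"
proof -
  have e: "(u,w) \<in> gE (H (Suc n))" using assms unfolding gB_iff by blast
  have "u \<in> gBob (H n)" using assms E_lev[OF e] unfolding gB_iff by (auto simp: gBob)
  then show ?thesis using assms restr_E[OF e assms(2)] unfolding gB_iff by blast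
qed

lemma parA: "even (x + y::nat) = lt \<Longrightarrow> (x = y \<or> (if lt then x = y + 1 else y = x + 1)) \<Longrightarrow> (if lt then x = y else y = x + 1)"
  by (cases lt) auto
lemma parB: "even (x + y::nat) = (\<not>lt) \<Longrightarrow> (x = y \<or> (if lt then x = y + 1 else y = x + 1)) \<Longrightarrow> (if lt then x = y + 1 else x = y)"
  by (cases lt) auto

lemma owner: "v \<in> gV (H n) \<Longrightarrow> lev v < n \<Longrightarrow> v \<in> gAlice (H n) \<or> v \<in> gBob (H n)"
  by (auto simp: gV gAlice gBob)

lemma childA: assumes "u \<in> gAlice (H n)" "k \<in> {1,2}"
  shows "(u, (dch D1 (fst u) k, snd u)) \<in> gA (H n)"
proof -
  obtain a b where u: "u = (a,b)" by (cases u)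
  have pv: "(a,b) \<in> PV" and lv: "lev (a,b) < n" and par: "even (lev (a,b)) = lt" using assms u by (auto simp: gAlice)
  have c: "if lt then dlen D1 a = dlen D2 b else dlen D2 b = dlen D1 a + 1"
    using pv par parA[of "dlen D1 a" "dlen D2 b"] unfolding PV_iff lev_eq by blast
  have a1: "dch D1 a k \<in> dv D1" "dlen D1 (dch D1 a k) = Suc (dlen D1 a)" using ch1[of a k] pv assms(2) by (auto simp: PV_iff)
  have ea: "((a,b), (dch D1 a k, b)) \<in> pEa lt D1 D2" unfolding pEa_def using pv assms(2) c by blast
  hence "((a,b), (dch D1 a k, b)) \<in> pedges lt D1 D2" by (simp add: pedges_def)
  with pedges_lev[OF this] lv have "((a,b), (dch D1 a k, b)) \<in> gE (H n)" using pv by (simp add: gE)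
  moreover have "\<exists>k'\<in>{1,2}. (dch D1 a k, b) = (dch D1 (fst u) k', snd u)" using u assms(2) by auto
  ultimately show ?thesis using assms(1) u unfolding gA_iff by simp
qed

lemma childB: assumes "u \<in> gBob (H n)" "k \<in> {1,2}"
  shows "(u, (fst u, dch D2 (snd u) k)) \<in> gB (H n) k"
proof -
  obtain a b where u: "u = (a,b)" by (cases u)
  have pv: "(a,b) \<in> PV" and lv: "lev (a,b) < n" and par: "even (lev (a,b)) = (\<not>lt)" using assms u by (auto simp: gBob)
  have c: "if lt then dlen D1 a = dlen D2 b + 1 else dlen D1 a = dlen D2 b"
    using pv par parB[of "dlen D1 a" "dlen D2 b"] unfolding PV_iff lev_eq by blast
  have eb: "((a,b), (a, dch D2 b k)) \<in> pEb lt D1 D2 k" unfolding pEb_def using pv assms(2) c by blast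
  hence "((a,b), (a, dch D2 b k)) \<in> pedges lt D1 D2" using assms(2) by (auto simp add: pedges_def)
  with pedges_lev[OF this] lv have "((a,b), (a, dch D2 b k)) \<in> gE (H n)" using pv by (simp add: gE)
  then show ?thesis using assms u unfolding gB_iff by simp
qed

lemma root_V: "groot (H n) \<in> gV (H n)" and root_lev: "lev (groot (H n)) = 0"
  by (auto simp: groot gV PV_iff r1 r2 l1 l2 plev_def)

end

definition tcl :: "nat \<Rightarrow> nat \<Rightarrow> nat \<Rightarrow> nat" where
  "tcl a b c = (if a < b then (if b < c then 0 else 3) else (if b < c then 1 else 2))"
definition clsw :: "('v \<Rightarrow> nat) \<Rightarrow> 'v list \<Rightarrow> nat \<Rightarrow> nat" where
  "clsw lv p k = (if k = 0 then 0 else if k = length p - 1 then 2 else tcl (lv (p!(k-1))) (lv (p!k)) (lv (p!(k+1))))"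
definition okc :: "nat \<Rightarrow> nat \<Rightarrow> bool" where
  "okc c d = ((c = 3 \<longrightarrow> d \<noteq> 3) \<and> (c \<le> 2 \<and> d \<le> 2 \<longrightarrow> c < d))"
definition loc_ok :: "'v game \<Rightarrow> 'v \<Rightarrow> 'v \<Rightarrow> 'v \<Rightarrow> bool" where
  "loc_ok G a b c = (\<forall>t1 t2. steptype G a b t1 \<longrightarrow> steptype G b c t2 \<longrightarrow>
      (b \<in> gV G - gOut G \<longrightarrow> interior_ok t1 t2) \<and> (b \<in> gOut G \<longrightarrow> boundary_ok t1 t2))"
definition edges_ok :: "'v game \<Rightarrow> 'v list \<Rightarrow> bool" where
  "edges_ok G p = (\<forall>k. 1 \<le> k \<and> k < length p \<longrightarrow> (p!(k-1), p!k) \<in> gE G \<or> (p!k, p!(k-1)) \<in> gE G)"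

lemma tcl_le: "tcl a b c \<le> 3" by (simp add: tcl_def)
lemma clsw_le: "clsw lv p k \<le> 3" by (simp add: clsw_def tcl_le)

context tg begin

lemma steptype_up: "steptype (H m) u w t \<Longrightarrow> is_up t \<Longrightarrow> lev w = Suc (lev u)"
  by (cases t) (auto simp: is_up_def dest!: A_E B_E E_lev)

lemma steptype_down: "steptype (H m) u w t \<Longrightarrow> is_down t \<Longrightarrow> lev u = Suc (lev w)"
  by (cases t) (auto simp: is_down_def dest!: A_E B_E E_lev)

lemma fwd_type: "(u,w) \<in> gE (H m) \<Longrightarrow> \<exists>t. steptype (H m) u w t \<and> is_up t"
  apply (drule E_cases)
  apply (elim disjE)
    apply (rule exI[of _ SU], simp add: is_up_def)
   apply (rule exI[of _ RU], simp add: is_up_def)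
  apply (rule exI[of _ LU], simp add: is_up_def)
  done

lemma bwd_type: "(w,u) \<in> gE (H m) \<Longrightarrow> \<exists>t. steptype (H m) u w t \<and> is_down t"
  apply (drule E_cases)
  apply (elim disjE)
    apply (rule exI[of _ SD], simp add: is_down_def)
   apply (rule exI[of _ LD], simp add: is_down_def)
  apply (rule exI[of _ RD], simp add: is_down_def)
  done

lemma lev_step: "edges_ok (H m) p \<Longrightarrow> 1 \<le> k \<Longrightarrow> k < length p \<Longrightarrow>
   lev (p!k) = Suc (lev (p!(k-1))) \<or> lev (p!(k-1)) = Suc (lev (p!k))"
  unfolding edges_ok_def by (auto dest: E_lev)

lemma step_up_iff: assumes "edges_ok (H m) p"
  shows "step_up (H m) p k \<longleftrightarrow> (1 \<le> k \<and> k < length p \<and> lev (p!(k-1)) < lev (p!k))"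
proof
  assume "step_up (H m) p k"
  then show "1 \<le> k \<and> k < length p \<and> lev (p!(k-1)) < lev (p!k)"
    unfolding step_up_def step_def using steptype_up by fastforce
next
  assume a: "1 \<le> k \<and> k < length p \<and> lev (p!(k-1)) < lev (p!k)"
  have "(p!(k-1), p!k) \<in> gE (H m) \<or> (p!k, p!(k-1)) \<in> gE (H m)" using assms a unfolding edges_ok_def by blast
  moreover have "(p!k, p!(k-1)) \<notin> gE (H m)" using a E_lev[of "p!k" "p!(k-1)" m] by auto
  ultimately have "(p!(k-1), p!k) \<in> gE (H m)" by blast
  then show "step_up (H m) p k" using fwd_type a unfolding step_up_def step_def by blast
qed

lemma step_down_iff: assumes "edges_ok (H m) p"
  shows "step_down (H m) p k \<longleftrightarrow> (1 \<le> k \<and> k < length p \<and> lev (p!(k-1)) > lev (p!k))"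
proof
  assume "step_down (H m) p k"
  then show "1 \<le> k \<and> k < length p \<and> lev (p!(k-1)) > lev (p!k)"
    unfolding step_down_def step_def using steptype_down by fastforce
next
  assume a: "1 \<le> k \<and> k < length p \<and> lev (p!(k-1)) > lev (p!k)"
  have "(p!(k-1), p!k) \<in> gE (H m) \<or> (p!k, p!(k-1)) \<in> gE (H m)" using assms a unfolding edges_ok_def by blast
  moreover have "(p!(k-1), p!k) \<notin> gE (H m)" using a E_lev[of "p!(k-1)" "p!k" m] by auto
  ultimately have "(p!k, p!(k-1)) \<in> gE (H m)" by blast
  then show "step_down (H m) p k" using bwd_type a unfolding step_down_def step_def by blast
qed

lemma nset_cls: assumes e: "edges_ok (H m) p" and l: "length p \<ge> 2" and s: "s \<le> 3"
  shows "Nset (H m) p s = {k. k < length p \<and> clsw lev p k = s}"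
proof -
  have ls: "\<And>k. 1 \<le> k \<Longrightarrow> k < length p \<Longrightarrow> lev (p!k) = Suc (lev (p!(k-1))) \<or> lev (p!(k-1)) = Suc (lev (p!k))"
    using lev_step[OF e] by blast
  have ls2: "lev (p!(k+1)) = Suc (lev (p!k)) \<or> lev (p!k) = Suc (lev (p!(k+1)))" if "k + 1 < length p" for k
    using ls[of "k+1"] that by simp
  have ls3: "lev (p!(k-1)) \<noteq> lev (p!k)" if "0 < k" "k < length p" for k
    using ls[of k] that by auto
  have ls4: "lev (p!(Suc k)) < lev (p!k) \<or> lev (p!k) < lev (p!(Suc k))" if "k < length p - 1" for k
    using ls2[of k] that by auto
  note su = step_up_iff[OF e] and sd = step_down_iff[OF e]
  have "s = 0 \<or> s = 1 \<or> s = 2 \<or> s = 3" using s by auto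
  then show ?thesis
  proof (elim disjE)
    assume "s = 0" then show ?thesis unfolding Nset_def Let_def using l
      apply (simp add: su clsw_def tcl_def)
      apply (rule set_eqI)
      apply (case_tac "x = 0", simp)
      apply (case_tac "x = length p - 1", simp)
      using ls4 ls3 apply (auto simp: nat_neq_iff)
      done
  next
    assume "s = 1" then show ?thesis unfolding Nset_def Let_def using l
      apply (simp add: su sd clsw_def tcl_def)
      apply (rule set_eqI)
      apply (case_tac "x = 0", simp)
      apply (case_tac "x = length p - 1", simp)
      using ls4 ls3 apply (auto simp: nat_neq_iff)
      done
  next
    assume "s = 2" then show ?thesis unfolding Nset_def Let_def using l
      apply (simp add: sd clsw_def tcl_def)
      apply (rule set_eqI)
      apply (case_tac "x = 0", simp)
      apply (case_tac "x = length p - 1", simp)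
      using ls4 ls3 apply (auto simp: nat_neq_iff)
      done
  next
    assume "s = 3" then show ?thesis unfolding Nset_def Let_def using l
      apply (simp add: su sd clsw_def tcl_def)
      apply (rule set_eqI)
      apply (case_tac "x = 0", simp)
      apply (case_tac "x = length p - 1", simp)
      using ls4 ls3 apply (auto simp: nat_neq_iff)
      done
  qed
qed

end

lemma loc_iff: assumes "0 < k" "k < length p - 1"
  shows "((\<forall>t1 t2. p!k \<in> gV G - gOut G \<and> step G p k t1 \<and> step G p (k+1) t2 \<longrightarrow> interior_ok t1 t2) \<and>
          (\<forall>t1 t2. p!k \<in> gOut G \<and> step G p k t1 \<and> step G p (k+1) t2 \<longrightarrow> boundary_ok t1 t2))
         \<longleftrightarrow> loc_ok G (p!(k-1)) (p!k) (p!(k+1))"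
proof -
  have h: "1 \<le> k" "k < length p" "k+1 < length p" using assms by auto
  show ?thesis unfolding loc_ok_def step_def using h by auto
qed

context tg begin

lemma pw_iff: assumes e: "edges_ok (H m) p" and l: "length p \<ge> 2"
  shows "((\<forall>k\<in>Nset (H m) p 3. \<forall>j\<in>Nset (H m) p 3. k \<noteq> j \<longrightarrow> p!k \<noteq> p!j) \<and>
          (\<forall>s t k j. s \<le> t \<and> t \<le> 2 \<and> k \<in> Nset (H m) p s \<and> j \<in> Nset (H m) p t \<and> p!k = p!j \<longrightarrow> k \<le> j))
     \<longleftrightarrow> (\<forall>k j. k < j \<and> j < length p \<longrightarrow> p!k = p!j \<longrightarrow> okc (clsw lev p k) (clsw lev p j))"
    (is "?A \<and> ?B \<longleftrightarrow> ?C")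
proof
  assume ab: "?A \<and> ?B"
  show ?C
  proof (intro allI impI)
    fix k j assume kj: "k < j \<and> j < length p" and eq: "p!k = p!j"
    let ?c = "clsw lev p k" and ?d = "clsw lev p j"
    have kN: "k \<in> Nset (H m) p ?c" and jN: "j \<in> Nset (H m) p ?d"
      using nset_cls[OF e l, of ?c] nset_cls[OF e l, of ?d] clsw_le[of lev p k] clsw_le[of lev p j] kj by auto
    have 1: "?c = 3 \<longrightarrow> ?d \<noteq> 3"
    proof
      assume "?c = 3" show "?d \<noteq> 3"
      proof
        assume "?d = 3"
        then show False using ab kN jN \<open>?c = 3\<close> kj eq by (metis less_irrefl)
      qed
    qed
    have 2: "?c \<le> 2 \<and> ?d \<le> 2 \<longrightarrow> ?c < ?d"
    proof
      assume c: "?c \<le> 2 \<and> ?d \<le> 2"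
      show "?c < ?d"
      proof (rule ccontr)
        assume "\<not> ?c < ?d"
        then have "?d \<le> ?c" by simp
        then have "j \<le> k" using ab c jN kN eq by metis
        then show False using kj by simp
      qed
    qed
    show "okc ?c ?d" using 1 2 by (simp add: okc_def)
  qed
next
  assume c: ?C
  have A: ?A
  proof (intro ballI impI)
    fix k j assume kN: "k \<in> Nset (H m) p 3" and jN: "j \<in> Nset (H m) p 3" and ne: "k \<noteq> j"
    have k3: "clsw lev p k = 3" "k < length p" and j3: "clsw lev p j = 3" "j < length p"
      using kN jN nset_cls[OF e l, of 3] by auto
    show "p!k \<noteq> p!j"
    proof
      assume eq: "p!k = p!j"
      show False
      proof (cases "k < j")
        case True then show False using c eq k3 j3 by (auto simp: okc_def)
      next
        case False then have "j < k" using ne by simp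
        then show False using c eq k3 j3 by (auto simp: okc_def)
      qed
    qed
  qed
  have B: ?B
  proof (intro allI impI)
    fix s t k j assume a: "s \<le> t \<and> t \<le> 2 \<and> k \<in> Nset (H m) p s \<and> j \<in> Nset (H m) p t \<and> p!k = p!j"
    have ks: "clsw lev p k = s" "k < length p" and jt: "clsw lev p j = t" "j < length p"
      using a nset_cls[OF e l, of s] nset_cls[OF e l, of t] by auto
    show "k \<le> j"
    proof (rule ccontr)
      assume "\<not> k \<le> j"
      then have "j < k" by simp
      then have "okc t s" using c a ks jt by metis
      then show False using a by (auto simp: okc_def)
    qed
  qed
  show "?A \<and> ?B" using A B by blast
qed

end

context tg begin

definition TP where "TP m p \<longleftrightarrow> edges_ok (H m) p \<and> 3 \<le> length p \<and> p!0 = groot (H m) \<and>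
   p!(length p - 1) = groot (H m) \<and> (step (H m) p 1 SU \<or> step (H m) p 1 RU) \<and>
   (step (H m) p (length p - 1) SD \<or> step (H m) p (length p - 1) RD) \<and>
   (\<forall>k. 0 < k \<and> k < length p - 1 \<longrightarrow> loc_ok (H m) (p!(k-1)) (p!k) (p!(k+1))) \<and>
   (\<forall>k j. k < j \<and> j < length p \<longrightarrow> p!k = p!j \<longrightarrow> okc (clsw lev p k) (clsw lev p j))"

lemma toom_unf: "toom_cycle G p \<longleftrightarrow> (is_walk G p \<and> 2 \<le> length p - 1 \<and>
     p ! 0 = groot G \<and> p ! (length p - 1) = groot G \<and>
     (step G p 1 SU \<or> step G p 1 RU) \<and>
     (step G p (length p - 1) SD \<or> step G p (length p - 1) RD) \<and>
     ((\<forall>k t1 t2. 0 < k \<and> k < length p - 1 \<and> p ! k \<in> gV G - gOut G \<and>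
         step G p k t1 \<and> step G p (k+1) t2 \<longrightarrow> interior_ok t1 t2) \<and>
     (\<forall>k t1 t2. 0 < k \<and> k < length p - 1 \<and> p ! k \<in> gOut G \<and>
         step G p k t1 \<and> step G p (k+1) t2 \<longrightarrow> boundary_ok t1 t2)) \<and>
     ((\<forall>k \<in> Nset G p 3. \<forall>m \<in> Nset G p 3. k \<noteq> m \<longrightarrow> p ! k \<noteq> p ! m) \<and>
     (\<forall>s t k m. s \<le> t \<and> t \<le> 2 \<and> k \<in> Nset G p s \<and> m \<in> Nset G p t \<and> p ! k = p ! m
         \<longrightarrow> k \<le> m)))"
  unfolding toom_cycle_def Let_def by (simp only: conj_assoc)

lemma loc_all: "((\<forall>k t1 t2. 0 < k \<and> k < length p - 1 \<and> p ! k \<in> gV G - gOut G \<and>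
         step G p k t1 \<and> step G p (k+1) t2 \<longrightarrow> interior_ok t1 t2) \<and>
     (\<forall>k t1 t2. 0 < k \<and> k < length p - 1 \<and> p ! k \<in> gOut G \<and>
         step G p k t1 \<and> step G p (k+1) t2 \<longrightarrow> boundary_ok t1 t2))
   \<longleftrightarrow> (\<forall>k. 0 < k \<and> k < length p - 1 \<longrightarrow> loc_ok G (p!(k-1)) (p!k) (p!(k+1)))" (is "?L \<longleftrightarrow> ?R")
proof
  assume L: ?L
  show ?R
  proof (intro allI impI)
    fix k assume k: "0 < k \<and> k < length p - 1"
    have "(\<forall>t1 t2. p!k \<in> gV G - gOut G \<and> step G p k t1 \<and> step G p (k+1) t2 \<longrightarrow> interior_ok t1 t2) \<and>
          (\<forall>t1 t2. p!k \<in> gOut G \<and> step G p k t1 \<and> step G p (k+1) t2 \<longrightarrow> boundary_ok t1 t2)"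
    proof (intro conjI allI impI)
      fix t1 t2 assume "p!k \<in> gV G - gOut G \<and> step G p k t1 \<and> step G p (k+1) t2"
      then show "interior_ok t1 t2" using L k by blast
    next
      fix t1 t2 assume "p!k \<in> gOut G \<and> step G p k t1 \<and> step G p (k+1) t2"
      then show "boundary_ok t1 t2" using L k by blast
    qed
    then show "loc_ok G (p!(k-1)) (p!k) (p!(k+1))" using loc_iff[of k p G] k by blast
  qed
next
  assume R: ?R
  show ?L
  proof (intro conjI allI impI)
    fix k t1 t2 assume a: "0 < k \<and> k < length p - 1 \<and> p ! k \<in> gV G - gOut G \<and> step G p k t1 \<and> step G p (k+1) t2"
    then have "loc_ok G (p!(k-1)) (p!k) (p!(k+1))" using R by blast
    then show "interior_ok t1 t2" using a unfolding loc_ok_def step_def by simp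
  next
    fix k t1 t2 assume a: "0 < k \<and> k < length p - 1 \<and> p ! k \<in> gOut G \<and> step G p k t1 \<and> step G p (k+1) t2"
    then have "loc_ok G (p!(k-1)) (p!k) (p!(k+1))" using R by blast
    then show "boundary_ok t1 t2" using a unfolding loc_ok_def step_def by simp
  qed
qed

lemma walk_edges: "is_walk (H m) p \<longleftrightarrow> p \<noteq> [] \<and> edges_ok (H m) p"
  unfolding is_walk_def edges_ok_def by blast

lemma toom_I: assumes "is_walk G p" "2 \<le> length p - 1" "p ! 0 = groot G" "p ! (length p - 1) = groot G"
     "step G p 1 SU \<or> step G p 1 RU" "step G p (length p - 1) SD \<or> step G p (length p - 1) RD"
     "(\<forall>k t1 t2. 0 < k \<and> k < length p - 1 \<and> p ! k \<in> gV G - gOut G \<and>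
         step G p k t1 \<and> step G p (k+1) t2 \<longrightarrow> interior_ok t1 t2)"
     "(\<forall>k t1 t2. 0 < k \<and> k < length p - 1 \<and> p ! k \<in> gOut G \<and>
         step G p k t1 \<and> step G p (k+1) t2 \<longrightarrow> boundary_ok t1 t2)"
     "(\<forall>k \<in> Nset G p 3. \<forall>m \<in> Nset G p 3. k \<noteq> m \<longrightarrow> p ! k \<noteq> p ! m)"
     "(\<forall>s t k m. s \<le> t \<and> t \<le> 2 \<and> k \<in> Nset G p s \<and> m \<in> Nset G p t \<and> p ! k = p ! m
         \<longrightarrow> k \<le> m)"
  shows "toom_cycle G p"
  unfolding toom_unf
  apply (insert assms)
  apply (intro conjI)
  apply assumption+
  done

lemma toom_TP1: assumes t: "toom_cycle (H m) p" shows "TP m p"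
proof -
  note d = toom_unf[THEN iffD1, OF t]
  have w: "is_walk (H m) p" using d by (elim conjE)
  have e: "edges_ok (H m) p" using w walk_edges by blast
  have l: "2 \<le> length p" "3 \<le> length p" using d by linarith+
  have r1: "p ! 0 = groot (H m)" using d by (elim conjE)
  have r2: "p ! (length p - 1) = groot (H m)" using d by (elim conjE)
  have f1: "step (H m) p 1 SU \<or> step (H m) p 1 RU" using d by (elim conjE)
  have f2: "step (H m) p (length p - 1) SD \<or> step (H m) p (length p - 1) RD"
    using d by (elim conjE)
  have lc: "((\<forall>k t1 t2. 0 < k \<and> k < length p - 1 \<and> p ! k \<in> gV (H m) - gOut (H m) \<and>
         step (H m) p k t1 \<and> step (H m) p (k+1) t2 \<longrightarrow> interior_ok t1 t2) \<and>
     (\<forall>k t1 t2. 0 < k \<and> k < length p - 1 \<and> p ! k \<in> gOut (H m) \<and>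
         step (H m) p k t1 \<and> step (H m) p (k+1) t2 \<longrightarrow> boundary_ok t1 t2))"
    using d by (elim conjE) (intro conjI)
  have pw0: "(\<forall>k\<in>Nset (H m) p 3. \<forall>j\<in>Nset (H m) p 3. k \<noteq> j \<longrightarrow> p!k \<noteq> p!j) \<and>
          (\<forall>s t k j. s \<le> t \<and> t \<le> 2 \<and> k \<in> Nset (H m) p s \<and> j \<in> Nset (H m) p t \<and> p!k = p!j \<longrightarrow> k \<le> j)"
    using d by (elim conjE) (intro conjI)
  have loc: "\<forall>k. 0 < k \<and> k < length p - 1 \<longrightarrow> loc_ok (H m) (p!(k-1)) (p!k) (p!(k+1))"
    by (rule loc_all[THEN iffD1, OF lc])
  have pw: "\<forall>k j. k < j \<and> j < length p \<longrightarrow> p!k = p!j \<longrightarrow> okc (clsw lev p k) (clsw lev p j)"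
    by (rule pw_iff[OF e l(1), THEN iffD1, OF pw0])
  show ?thesis unfolding TP_def by (intro conjI e l(2) r1 r2 f1 f2 loc pw)
qed

lemma toom_TP2: assumes a: "TP m p" shows "toom_cycle (H m) p"
proof -
  have e: "edges_ok (H m) p" using a unfolding TP_def by (elim conjE)
  have l: "3 \<le> length p" using a unfolding TP_def by (elim conjE)
  have r1: "p!0 = groot (H m)" using a unfolding TP_def by (elim conjE)
  have r2: "p!(length p - 1) = groot (H m)" using a unfolding TP_def by (elim conjE)
  have f: "step (H m) p 1 SU \<or> step (H m) p 1 RU" using a unfolding TP_def by (elim conjE)
  have la: "step (H m) p (length p - 1) SD \<or> step (H m) p (length p - 1) RD" using a unfolding TP_def by (elim conjE)
  have loc: "\<forall>k. 0 < k \<and> k < length p - 1 \<longrightarrow> loc_ok (H m) (p!(k-1)) (p!k) (p!(k+1))" using a unfolding TP_def by (elim conjE)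
  have pw: "\<forall>k j. k < j \<and> j < length p \<longrightarrow> p!k = p!j \<longrightarrow> okc (clsw lev p k) (clsw lev p j)" using a unfolding TP_def by (elim conjE)
  have l2: "2 \<le> length p" "2 \<le> length p - 1" "p \<noteq> []" using l by auto
  have w: "is_walk (H m) p" using e l2 walk_edges by blast
  have lc: "((\<forall>k t1 t2. 0 < k \<and> k < length p - 1 \<and> p ! k \<in> gV (H m) - gOut (H m) \<and>
         step (H m) p k t1 \<and> step (H m) p (k+1) t2 \<longrightarrow> interior_ok t1 t2) \<and>
     (\<forall>k t1 t2. 0 < k \<and> k < length p - 1 \<and> p ! k \<in> gOut (H m) \<and>
         step (H m) p k t1 \<and> step (H m) p (k+1) t2 \<longrightarrow> boundary_ok t1 t2))"
    by (rule loc_all[THEN iffD2, OF loc])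
  have pw2: "(\<forall>k\<in>Nset (H m) p 3. \<forall>j\<in>Nset (H m) p 3. k \<noteq> j \<longrightarrow> p!k \<noteq> p!j) \<and>
          (\<forall>s t k j. s \<le> t \<and> t \<le> 2 \<and> k \<in> Nset (H m) p s \<and> j \<in> Nset (H m) p t \<and> p!k = p!j \<longrightarrow> k \<le> j)"
    by (rule pw_iff[OF e l2(1), THEN iffD2, OF pw])
  show ?thesis
    by (rule toom_I[OF w l2(2) r1 r2 f la conjunct1[OF lc] conjunct2[OF lc] conjunct1[OF pw2] conjunct2[OF pw2]])
qed

end

context tg begin

lemma same_ownerA: "v \<in> gAlice (H m) \<Longrightarrow> w \<in> gV (H m) \<Longrightarrow> lev w = lev v \<Longrightarrow> w \<in> gAlice (H m)"
  unfolding gAlice gV by simp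
lemma same_ownerB: "v \<in> gBob (H m) \<Longrightarrow> w \<in> gV (H m) \<Longrightarrow> lev w = lev v \<Longrightarrow> w \<in> gBob (H m)"
  unfolding gBob gV by simp
lemma opp_ownerA: "v \<in> gAlice (H m) \<Longrightarrow> w \<in> gV (H m) \<Longrightarrow> lev v = Suc (lev w) \<Longrightarrow> w \<in> gBob (H m)"
  unfolding gAlice gBob gV by (cases lt) auto
lemma opp_ownerB: "v \<in> gBob (H m) \<Longrightarrow> w \<in> gV (H m) \<Longrightarrow> lev v = Suc (lev w) \<Longrightarrow> w \<in> gAlice (H m)"
  unfolding gAlice gBob gV by (cases lt) auto
lemma opp_ownerA': "v \<in> gAlice (H m) \<Longrightarrow> w \<in> gV (H m) \<Longrightarrow> lev w = Suc (lev v) \<Longrightarrow> lev w < m \<Longrightarrow> w \<in> gBob (H m)"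
  unfolding gAlice gBob gV by (cases lt) auto
lemma opp_ownerB': "v \<in> gBob (H m) \<Longrightarrow> w \<in> gV (H m) \<Longrightarrow> lev w = Suc (lev v) \<Longrightarrow> lev w < m \<Longrightarrow> w \<in> gAlice (H m)"
  unfolding gAlice gBob gV by (cases lt) auto

lemma st_mono: "steptype (H n) u w t \<Longrightarrow> steptype (H (Suc n)) u w t"
  by (cases t) (auto intro: mono_A mono_B)

lemma st_restr: "steptype (H (Suc n)) u w t \<Longrightarrow> lev u \<le> n \<Longrightarrow> lev w \<le> n \<Longrightarrow> steptype (H n) u w t"
  by (cases t) (auto intro: restr_A restr_B)

lemma Al_V: "v \<in> gAlice (H m) \<Longrightarrow> v \<in> gV (H m) \<and> lev v < m" unfolding gAlice gV by simp
lemma Bo_V: "v \<in> gBob (H m) \<Longrightarrow> v \<in> gV (H m) \<and> lev v < m" unfolding gBob gV by simp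
lemma Out_iff: "v \<in> gOut (H m) \<longleftrightarrow> v \<in> gV (H m) \<and> lev v = m" unfolding gOut gV by auto

lemma loc_lift: assumes "a \<in> gV (H n)" "b \<in> gV (H n)" "c \<in> gV (H n)" "lev b < n" "loc_ok (H n) a b c"
  shows "loc_ok (H (Suc n)) a b c"
  unfolding loc_ok_def
proof (intro allI impI)
  fix t1 t2 assume s1: "steptype (H (Suc n)) a b t1" and s2: "steptype (H (Suc n)) b c t2"
  have la: "lev a \<le> n" "lev b \<le> n" "lev c \<le> n" using assms by (auto simp: gV)
  have s1': "steptype (H n) a b t1" and s2': "steptype (H n) b c t2" using st_restr s1 s2 la by auto
  have bi: "b \<in> gV (H n) - gOut (H n)" using assms by (auto simp: Out_iff)
  have "interior_ok t1 t2" using assms(5) s1' s2' bi unfolding loc_ok_def by blast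
  moreover have "b \<notin> gOut (H (Suc n))" using assms(4) by (simp add: Out_iff)
  ultimately show "(b \<in> gV (H (Suc n)) - gOut (H (Suc n)) \<longrightarrow> interior_ok t1 t2) \<and>
         (b \<in> gOut (H (Suc n)) \<longrightarrow> boundary_ok t1 t2)" by blast
qed

end

locale refine = tg +
  fixes n :: nat and q :: "('a \<times> 'b) list" and x :: "'a \<times> 'b \<Rightarrow> nat"
  assumes n1: "1 \<le> n" and tq: "TP n q"
  and pA: "\<And>k. k < length q \<Longrightarrow> q!k \<in> gOut (H n) \<Longrightarrow> q!k \<in> gAlice (H (Suc n)) \<Longrightarrow> \<exists>u. (q!k, u) \<in> gA (H (Suc n)) \<and> x u = 0"
  and pB: "\<And>k u. k < length q \<Longrightarrow> q!k \<in> gOut (H n) \<Longrightarrow> q!k \<in> gBob (H (Suc n)) \<Longrightarrow> (q!k, u) \<in> gE (H (Suc n)) \<Longrightarrow> x u = 0"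
begin

abbreviation "HH \<equiv> H (Suc n)"
abbreviation "rt \<equiv> (droot D1, droot D2)"

definition pk where "pk i \<longleftrightarrow> 0 < i \<and> i < length q - 1 \<and> lev (q!i) = n"
definition PP where "PP w = {p. pk p \<and> (q!p, w) \<in> gE (H (Suc n))}"
definition cc1 where "cc1 v = (fst v, dch D2 (snd v) 1)"
definition cc2 where "cc2 v = (fst v, dch D2 (snd v) 2)"

lemma q_e: "edges_ok (H n) q" using tq unfolding TP_def by (elim conjE)
lemma q_len: "3 \<le> length q" using tq unfolding TP_def by (elim conjE)
lemma q_0: "q!0 = rt" using tq unfolding TP_def groot by (elim conjE)
lemma q_l: "q!(length q - 1) = rt" using tq unfolding TP_def groot by (elim conjE)
lemma q_f: "step (H n) q 1 SU \<or> step (H n) q 1 RU" using tq unfolding TP_def by (elim conjE)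
lemma q_la: "step (H n) q (length q - 1) SD \<or> step (H n) q (length q - 1) RD" using tq unfolding TP_def by (elim conjE)
lemma q_loc: "0 < k \<Longrightarrow> k < length q - 1 \<Longrightarrow> loc_ok (H n) (q!(k-1)) (q!k) (q!(k+1))"
  using tq unfolding TP_def by (elim conjE) blast
lemma q_pw: "k < j \<Longrightarrow> j < length q \<Longrightarrow> q!k = q!j \<Longrightarrow> okc (clsw lev q k) (clsw lev q j)"
  using tq unfolding TP_def by (elim conjE) blast

lemma q_edge: "1 \<le> k \<Longrightarrow> k < length q \<Longrightarrow> (q!(k-1), q!k) \<in> gE (H n) \<or> (q!k, q!(k-1)) \<in> gE (H n)"
  using q_e unfolding edges_ok_def by blast

lemma q_V: assumes "k < length q" shows "q!k \<in> gV (H n)"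
proof (cases "k = 0")
  case True
  then show ?thesis using q_edge[of 1] q_len E_lev by fastforce
next
  case False
  then show ?thesis using q_edge[of k] assms E_lev by fastforce
qed

lemma q_lev: "k < length q \<Longrightarrow> lev (q!k) \<le> n" using q_V by (simp add: gV)

lemma q_lstep: "1 \<le> k \<Longrightarrow> k < length q \<Longrightarrow> lev (q!k) = Suc (lev (q!(k-1))) \<or> lev (q!(k-1)) = Suc (lev (q!k))"
  using lev_step[OF q_e] by blast

lemma rt_lev: "lev rt = 0" using root_lev[of 0] by (simp add: groot)

lemma pk_nb: assumes "pk i" shows "Suc (lev (q!(i-1))) = n" "Suc (lev (q!(i+1))) = n"
proof -
  have i: "0 < i" "i + 1 < length q" "lev (q!i) = n" using assms unfolding pk_def by auto
  have a: "i - 1 < length q" "i < length q" using i by auto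
  show "Suc (lev (q!(i-1))) = n" using q_lstep[of i] i q_lev[OF a(1)] a by auto
  show "Suc (lev (q!(i+1))) = n" using q_lstep[of "i+1"] i q_lev[of "i+1"] by auto
qed

lemma nonpk_lev: assumes "k < length q" "\<not> pk k" shows "lev (q!k) < n"
proof -
  have "k = 0 \<or> k = length q - 1 \<or> (0 < k \<and> k < length q - 1)" using assms by auto
  then show ?thesis
  proof (elim disjE)
    assume "k = 0" then show ?thesis using q_0 rt_lev n1 by simp
  next
    assume "k = length q - 1" then show ?thesis using q_l rt_lev n1 by simp
  next
    assume "0 < k \<and> k < length q - 1"
    then show ?thesis using assms q_lev[of k] unfolding pk_def by auto
  qed
qed

lemma pk_cls: assumes "pk i" shows "clsw lev q i = 3"
proof -
  have i: "0 < i" "i < length q - 1" "lev (q!i) = n" using assms unfolding pk_def by auto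
  show ?thesis using i pk_nb[OF assms] unfolding clsw_def tcl_def by auto
qed

lemma pk_inj: assumes "pk i" "pk j" "q!i = q!j" shows "i = j"
proof (rule ccontr)
  assume "i \<noteq> j"
  then have "i < j \<or> j < i" by auto
  moreover have "i < length q" "j < length q" using assms unfolding pk_def by auto
  ultimately show False using q_pw[of i j] q_pw[of j i] assms pk_cls[OF assms(1)] pk_cls[OF assms(2)]
    by (auto simp: okc_def)
qed

lemma pk_out: "pk i \<Longrightarrow> q!i \<in> gOut (H n)"
  using q_V[of i] unfolding pk_def Out_iff by auto

lemma pk_V: assumes "pk i" shows "q!i \<in> gV HH \<and> lev (q!i) = n"
proof -
  have "i < length q" "lev (q!i) = n" using assms unfolding pk_def by auto
  then show ?thesis using q_V[of i] mono_V[of "q!i" n] by simp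
qed

lemma pk_owner: "pk i \<Longrightarrow> q!i \<in> gAlice HH \<or> q!i \<in> gBob HH"
  using pk_V[of i] owner by auto

lemma pk_lt: "pk i \<Longrightarrow> i < length q - 1 \<and> 0 < i" unfolding pk_def by auto

lemma q_loc_HH: assumes "0 < k" "k < length q - 1" "\<not> pk k"
  shows "loc_ok HH (q!(k-1)) (q!k) (q!(k+1))"
  using loc_lift[OF q_V q_V q_V nonpk_lev q_loc] assms by auto

lemma q_edge_HH: "1 \<le> k \<Longrightarrow> k < length q \<Longrightarrow> (q!(k-1), q!k) \<in> gE HH \<or> (q!k, q!(k-1)) \<in> gE HH"
  using q_edge mono_E by blast

end

lemma cls_app: assumes "k < length p - 1" shows "clsw lv (p@[z]) k = clsw lv p k"
  using assms unfolding clsw_def by (auto simp: nth_append)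

lemma cls_app_last: assumes "p \<noteq> []"
  shows "clsw lv (p@[z]) (length p - 1) = (if length p - 1 = 0 then 0 else tcl (lv (p!(length p - 2))) (lv (p!(length p - 1))) (lv z))"
proof -
  obtain L where L: "length p = Suc L" using assms by (cases p) auto
  show ?thesis unfolding clsw_def using L by (auto simp: nth_append numeral_2_eq_2)
qed

definition Ent :: "'v list \<Rightarrow> ('v \<Rightarrow> nat \<Rightarrow> bool) \<Rightarrow> ('v \<Rightarrow> nat) \<Rightarrow> bool" where
  "Ent p P lv \<longleftrightarrow> (\<forall>k < length p - 1. P (p!k) (clsw lv p k))"

lemma Ent_app1: assumes "Ent p P lv" "p \<noteq> []" "P (p!(length p - 1)) (clsw lv (p@[z]) (length p - 1))"
  shows "Ent (p@[z]) P lv"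
  unfolding Ent_def
proof (intro allI impI)
  fix k assume k: "k < length (p@[z]) - 1"
  show "P ((p@[z])!k) (clsw lv (p@[z]) k)"
  proof (cases "k < length p - 1")
    case True
    then have "k < length p" by simp
    then show ?thesis using assms(1) cls_app[OF True] True unfolding Ent_def by (simp add: nth_append)
  next
    case False
    then have "k = length p - 1" using k by simp
    then show ?thesis using assms(2,3) by (simp add: nth_append)
  qed
qed

lemma Ent_mono: "Ent p P lv \<Longrightarrow> (\<And>v c. P v c \<Longrightarrow> Q v c) \<Longrightarrow> Ent p Q lv"
  unfolding Ent_def by blast

lemma Ent_D: "Ent p P lv \<Longrightarrow> k < length p - 1 \<Longrightarrow> P (p!k) (clsw lv p k)"
  unfolding Ent_def by blast

context refine begin

definition base :: "('a \<times> 'b) list \<Rightarrow> bool" where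
 "base p \<longleftrightarrow> p \<noteq> [] \<and> p!0 = rt \<and> edges_ok HH p \<and>
   (\<forall>k. 0 < k \<and> k < length p - 1 \<longrightarrow> loc_ok HH (p!(k-1)) (p!k) (p!(k+1))) \<and>
   (\<forall>k j. k < j \<and> j < length p - 1 \<longrightarrow> p!k = p!j \<longrightarrow> okc (clsw lev p k) (clsw lev p j)) \<and>
   (\<forall>k < length p. p!k \<in> gOut HH \<longrightarrow> x (p!k) = 0) \<and>
   (2 \<le> length p \<longrightarrow> p!1 = q!1)"

lemma base_app1: assumes b: "base p"
  and e: "(p!(length p - 1), z) \<in> gE HH \<or> (z, p!(length p - 1)) \<in> gE HH"
  and lo: "0 < length p - 1 \<Longrightarrow> loc_ok HH (p!(length p - 2)) (p!(length p - 1)) z"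
  and c: "\<And>k. k < length p - 1 \<Longrightarrow> p!k = p!(length p - 1) \<Longrightarrow> okc (clsw lev p k) (clsw lev (p@[z]) (length p - 1))"
  and xz: "z \<in> gOut HH \<Longrightarrow> x z = 0"
  and f: "length p = 1 \<Longrightarrow> z = q!1"
  shows "base (p@[z])"
proof -
  have ne: "p \<noteq> []" and p0: "p!0 = rt" and ed: "edges_ok HH p"
    and lc: "\<forall>k. 0 < k \<and> k < length p - 1 \<longrightarrow> loc_ok HH (p!(k-1)) (p!k) (p!(k+1))"
    and pw: "\<forall>k j. k < j \<and> j < length p - 1 \<longrightarrow> p!k = p!j \<longrightarrow> okc (clsw lev p k) (clsw lev p j)"
    and xo: "\<forall>k < length p. p!k \<in> gOut HH \<longrightarrow> x (p!k) = 0"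
    and p1: "2 \<le> length p \<longrightarrow> p!1 = q!1"
    using b unfolding base_def by simp_all
  let ?p = "p@[z]"
  have ed': "edges_ok HH ?p" unfolding edges_ok_def
  proof (intro allI impI)
    fix k assume k: "1 \<le> k \<and> k < length ?p"
    show "(?p!(k-1), ?p!k) \<in> gE HH \<or> (?p!k, ?p!(k-1)) \<in> gE HH"
    proof (cases "k < length p")
      case True then show ?thesis using ed k unfolding edges_ok_def by (auto simp: nth_append)
    next
      case False then have "k = length p" using k by simp
      then show ?thesis using e k by (auto simp: nth_append)
    qed
  qed
  have lc': "\<forall>k. 0 < k \<and> k < length ?p - 1 \<longrightarrow> loc_ok HH (?p!(k-1)) (?p!k) (?p!(k+1))"
  proof (intro allI impI)
    fix k assume k: "0 < k \<and> k < length ?p - 1"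
    show "loc_ok HH (?p!(k-1)) (?p!k) (?p!(k+1))"
    proof (cases "k < length p - 1")
      case True then show ?thesis using lc k by (auto simp: nth_append)
    next
      case False
      have "k < length p" using k by simp
      then have kk: "k = length p - 1" using False by linarith
      then have "?p!(k-1) = p!(length p - 2)" "?p!k = p!(length p - 1)" "?p!(k+1) = z"
        using k by (auto simp: nth_append numeral_2_eq_2)
      then show ?thesis using lo k kk by simp
    qed
  qed
  have pw': "\<forall>k j. k < j \<and> j < length ?p - 1 \<longrightarrow> ?p!k = ?p!j \<longrightarrow> okc (clsw lev ?p k) (clsw lev ?p j)"
  proof (intro allI impI)
    fix k j assume kj: "k < j \<and> j < length ?p - 1" and eq: "?p!k = ?p!j"
    show "okc (clsw lev ?p k) (clsw lev ?p j)"
    proof (cases "j < length p - 1")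
      case True
      then show ?thesis using pw kj eq cls_app[of k p lev z] cls_app[of j p lev z] by (auto simp: nth_append)
    next
      case False
      have "j < length p" using kj by simp
      then have jj: "j = length p - 1" using False by linarith
      have k1: "k < length p - 1" using kj jj by simp
      have "?p!k = p!k" "?p!j = p!(length p - 1)" using k1 jj ne by (auto simp: nth_append)
      then have "p!k = p!(length p - 1)" using eq by simp
      then show ?thesis using c[OF k1] jj cls_app[OF k1, of lev z] by simp
    qed
  qed
  have xo': "\<forall>k < length ?p. ?p!k \<in> gOut HH \<longrightarrow> x (?p!k) = 0"
    using xo xz by (auto simp: nth_append)
  have p1': "2 \<le> length ?p \<longrightarrow> ?p!1 = q!1"
  proof
    assume "2 \<le> length ?p"
    show "?p!1 = q!1"
    proof (cases "length p = 1")
      case True then show ?thesis using f by (simp add: nth_append)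
    next
      case False
      have "length p \<noteq> 0" using ne by simp
      then have "2 \<le> length p" using False by linarith
      then show ?thesis using p1 by (simp add: nth_append)
    qed
  qed
  have p0': "?p!0 = rt" using p0 ne by (simp add: nth_append)
  show ?thesis unfolding base_def using ed' lc' pw' xo' p1' p0' by simp
qed

definition EK :: "nat \<Rightarrow> 'a \<times> 'b \<Rightarrow> nat \<Rightarrow> bool" where
  "EK m v c \<longleftrightarrow> (\<exists>r<m. \<not> pk r \<and> r < length q \<and> v = q!r \<and> c = clsw lev q r) \<or> (\<exists>r<m. pk r \<and> v = q!r) \<or>
     (lev v = Suc n \<and> (\<forall>r\<in>PP v. r < m))"

lemma EK_mono: assumes "EK m v c" "m \<le> m'" shows "EK m' v c"
proof -
  have "\<And>r. r < m \<Longrightarrow> r < m'" using assms(2) by simp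
  then show ?thesis using assms(1) unfolding EK_def by blast
qed

lemma EK_kept: assumes "EK m v c" "v = q!m" "m < length q" "\<not> pk m" shows "okc c (clsw lev q m)"
proof -
  have lm: "lev (q!m) < n" using nonpk_lev assms by simp
  have "(\<exists>r<m. \<not> pk r \<and> r < length q \<and> v = q!r \<and> c = clsw lev q r)"
    using assms(1) lm assms(2) pk_V unfolding EK_def by force
  then obtain r where r: "r < m" "v = q!r" "c = clsw lev q r" by blast
  then show ?thesis using q_pw[of r m] assms by simp
qed

lemma EK_peak: assumes "EK c v cl" "c \<le> j" "pk j" shows "v \<noteq> q!j"
proof
  assume v: "v = q!j"
  have lj: "lev (q!j) = n" using pk_V[OF assms(3)] by simp
  show False using assms(1) unfolding EK_def
  proof (elim disjE exE conjE)
    fix r assume "r < c" "\<not> pk r" "r < length q" "v = q!r" "cl = clsw lev q r"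
    then show False using nonpk_lev[of r] v lj by simp
  next
    fix r assume "r < c" "pk r" "v = q!r"
    then show False using pk_inj[of r j] v assms by simp
  next
    assume "lev v = Suc n" then show False using v lj by simp
  qed
qed

lemma EK_top: assumes "EK c v cl" "r \<in> PP w" "c \<le> r" "lev w = Suc n" shows "v \<noteq> w"
proof
  assume v: "v = w"
  show False using assms(1) unfolding EK_def
  proof (elim disjE exE conjE)
    fix r' assume "r' < c" "\<not> pk r'" "r' < length q" "v = q!r'" "cl = clsw lev q r'"
    then show False using q_lev[of r'] v assms(4) by simp
  next
    fix r' assume "r' < c" "pk r'" "v = q!r'"
    then show False using pk_V[of r'] v assms(4) by simp
  next
    assume "\<forall>r\<in>PP v. r < c" then show False using assms v by auto
  qed
qed

lemma EK_lev: assumes "EK c v cl" shows "lev v \<le> Suc n"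
  using assms unfolding EK_def
proof (elim disjE exE conjE)
  fix r assume "r < c" "\<not> pk r" "r < length q" "v = q!r" then show ?thesis using q_lev[of r] by simp
next
  fix r assume "r < c" "pk r" "v = q!r" then show ?thesis using pk_V[of r] by simp
qed simp

end

context tg begin

lemma ABd: "v \<in> gAlice (H n) \<Longrightarrow> v \<in> gBob (H m) \<Longrightarrow> False"
  by (cases v) (metis AB_disj)

lemma A_lev: "(a,b) \<in> gA (H m) \<Longrightarrow> lev b = Suc (lev a)" using A_E E_lev by blast
lemma B_lev: "(a,b) \<in> gB (H m) k \<Longrightarrow> lev b = Suc (lev a)" using B_E E_lev by blast
lemma A_Al: "(a,b) \<in> gA (H m) \<Longrightarrow> a \<in> gAlice (H m)" using A_E by blast
lemma B_Bo: "(a,b) \<in> gB (H m) k \<Longrightarrow> a \<in> gBob (H m)" using B_E by blast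

lemma st_up_Al: assumes "u \<in> gAlice (H m)" "steptype (H m) u w t" "lev w = Suc (lev u)" shows "t = SU"
proof (cases t)
  case SD then show ?thesis using assms A_lev[of w u m] by simp
next
  case LU
  then have "(u,w) \<in> gB (H m) 2" using assms by simp
  then show ?thesis using B_Bo ABd assms(1) by blast
next
  case RU
  then have "(u,w) \<in> gB (H m) 1" using assms by simp
  then show ?thesis using B_Bo ABd assms(1) by blast
next
  case LD then show ?thesis using assms B_lev[of w u m 1] by simp
next
  case RD then show ?thesis using assms B_lev[of w u m 2] by simp
qed simp

lemma st_up_Bo: assumes "u \<in> gBob (H m)" "steptype (H m) u w t" "lev w = Suc (lev u)"
  shows "(t = RU \<and> (u,w) \<in> gB (H m) 1) \<or> (t = LU \<and> (u,w) \<in> gB (H m) 2)"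
proof (cases t)
  case SU
  then have "(u,w) \<in> gA (H m)" using assms by simp
  then show ?thesis using A_Al ABd assms(1) by blast
next
  case SD then show ?thesis using assms A_lev[of w u m] by simp
next
  case LD then show ?thesis using assms B_lev[of w u m 1] by simp
next
  case RD then show ?thesis using assms B_lev[of w u m 2] by simp
qed (use assms in simp_all)

lemma st_dn_Al: assumes "w \<in> gAlice (H m)" "steptype (H m) u w t" "lev u = Suc (lev w)" shows "t = SD"
proof (cases t)
  case SU then show ?thesis using assms A_lev[of u w m] by simp
next
  case LU then show ?thesis using assms B_lev[of u w m 2] by simp
next
  case RU then show ?thesis using assms B_lev[of u w m 1] by simp
next
  case LD
  then have "(w,u) \<in> gB (H m) 1" using assms by simp
  then show ?thesis using B_Bo ABd assms(1) by blast
next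
  case RD
  then have "(w,u) \<in> gB (H m) 2" using assms by simp
  then show ?thesis using B_Bo ABd assms(1) by blast
qed simp

lemma st_dn_Bo: assumes "w \<in> gBob (H m)" "steptype (H m) u w t" "lev u = Suc (lev w)"
  shows "(t = LD \<and> (w,u) \<in> gB (H m) 1) \<or> (t = RD \<and> (w,u) \<in> gB (H m) 2)"
proof (cases t)
  case SU then show ?thesis using assms A_lev[of u w m] by simp
next
  case LU then show ?thesis using assms B_lev[of u w m 2] by simp
next
  case RU then show ?thesis using assms B_lev[of u w m 1] by simp
next
  case SD
  then have "(w,u) \<in> gA (H m)" using assms by simp
  then show ?thesis using A_Al ABd assms(1) by blast
qed (use assms in simp_all)

end

context refine begin

definition stK where "stK m p \<longleftrightarrow> base p \<and> m < length q \<and> \<not> pk m \<and> p!(length p - 1) = q!m \<and>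
   (m = 0 \<longrightarrow> p = [rt]) \<and> (0 < m \<longrightarrow> 2 \<le> length p \<and> p!(length p - 2) = q!(m-1)) \<and> Ent p (EK m) lev"

lemma stK_D: assumes "stK m p"
  shows "base p" "m < length q" "\<not> pk m" "p!(length p - 1) = q!m" "m = 0 \<Longrightarrow> p = [rt]"
    "0 < m \<Longrightarrow> 2 \<le> length p" "0 < m \<Longrightarrow> p!(length p - 2) = q!(m-1)" "Ent p (EK m) lev"
  using assms unfolding stK_def by simp_all

lemma base_ne: "base p \<Longrightarrow> p \<noteq> []" unfolding base_def by simp

lemma K_app: assumes st: "stK m p" and m1: "m + 1 < length q"
  shows "base (p@[q!(m+1)]) \<and> Ent (p@[q!(m+1)]) (EK (m+1)) lev \<and> clsw lev (p@[q!(m+1)]) (length p - 1) = clsw lev q m"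
proof -
  note d = stK_D[OF st]
  have ne: "p \<noteq> []" using base_ne[OF d(1)] .
  let ?z = "q!(m+1)"
  have ncls: "clsw lev (p@[?z]) (length p - 1) = clsw lev q m"
  proof (cases "m = 0")
    case True
    then show ?thesis using d(5) by (simp add: clsw_def)
  next
    case False
    then have "2 \<le> length p" "p!(length p - 2) = q!(m-1)" using d(6,7) by auto
    moreover have "m \<noteq> length q - 1" using m1 by simp
    ultimately show ?thesis using cls_app_last[OF ne, of lev ?z] d(4) False unfolding clsw_def by simp
  qed
  have b': "base (p@[?z])"
  proof (rule base_app1[OF d(1)])
    show "(p!(length p - 1), ?z) \<in> gE HH \<or> (?z, p!(length p - 1)) \<in> gE HH"
      using q_edge_HH[of "m+1"] m1 d(4) by simp
  next
    assume "0 < length p - 1"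
    then have m0: "0 < m" using d(5) by (cases "m = 0") auto
    then show "loc_ok HH (p!(length p - 2)) (p!(length p - 1)) ?z"
      using q_loc_HH[of m] d(3,4,7) m1 by simp
  next
    fix k assume k: "k < length p - 1" "p!k = p!(length p - 1)"
    have "EK m (p!k) (clsw lev p k)" using Ent_D[OF d(8) k(1)] .
    then show "okc (clsw lev p k) (clsw lev (p@[?z]) (length p - 1))"
      using EK_kept[of m "p!k" "clsw lev p k"] k(2) d(2,3,4) ncls by simp
  next
    assume "?z \<in> gOut HH"
    then show "x ?z = 0" using q_lev[of "m+1"] m1 by (simp add: Out_iff)
  next
    assume "length p = 1"
    then have "m = 0" using d(6) by (cases "m = 0") auto
    then show "?z = q!1" by simp
  qed
  have ent: "Ent (p@[?z]) (EK (m+1)) lev"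
  proof (rule Ent_app1[OF _ ne])
    show "Ent p (EK (m+1)) lev" using Ent_mono[OF d(8)] EK_mono by simp
    show "EK (m+1) (p!(length p - 1)) (clsw lev (p@[?z]) (length p - 1))"
      unfolding ncls d(4) EK_def using d(2,3) by (intro disjI1 exI[of _ m]) simp
  qed
  show ?thesis using b' ent ncls by simp
qed

lemma K_step: assumes st: "stK m p" and m1: "m + 1 < length q" and np: "\<not> pk (m+1)"
  shows "stK (m+1) (p@[q!(m+1)])"
proof -
  note d = stK_D[OF st]
  have ne: "p \<noteq> []" using base_ne[OF d(1)] .
  have lp: "0 < length p" using ne by simp
  show ?thesis unfolding stK_def using K_app[OF st m1] m1 np ne d(4) lp by (simp add: nth_append Suc_le_eq)
qed


lemma cc1_edge: "v \<in> gBob HH \<Longrightarrow> (v, cc1 v) \<in> gB HH 1"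
  unfolding cc1_def using childB[of v "Suc n" 1] by simp
lemma cc2_edge: "v \<in> gBob HH \<Longrightarrow> (v, cc2 v) \<in> gB HH 2"
  unfolding cc2_def using childB[of v "Suc n" 2] by simp
lemma cc12: "v \<in> gBob HH \<Longrightarrow> cc1 v \<noteq> cc2 v"
  using cc1_edge cc2_edge B12 Bpar by metis

lemma pk_prev_next: assumes "pk i"
  shows "q!(i-1) \<in> gV HH" "q!(i+1) \<in> gV HH" "lev (q!i) = Suc (lev (q!(i-1)))" "lev (q!i) = Suc (lev (q!(i+1)))"
proof -
  have i: "0 < i" "i + 1 < length q" using assms unfolding pk_def by auto
  show "q!(i-1) \<in> gV HH" "q!(i+1) \<in> gV HH" using q_V[of "i-1"] q_V[of "i+1"] mono_V i by auto
  show "lev (q!i) = Suc (lev (q!(i-1)))" "lev (q!i) = Suc (lev (q!(i+1)))" using pk_nb[OF assms] pk_V[OF assms] by auto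
qed

lemma pk_Bob_nb: assumes "pk i" "q!i \<in> gBob HH" shows "q!(i-1) \<in> gAlice HH" "q!(i+1) \<in> gAlice HH"
  using opp_ownerB[OF assms(2)] pk_prev_next[OF assms(1)] by auto
lemma pk_Al_nb: assumes "pk i" "q!i \<in> gAlice HH" shows "q!(i-1) \<in> gBob HH" "q!(i+1) \<in> gBob HH"
  using opp_ownerA[OF assms(2)] pk_prev_next[OF assms(1)] by auto

lemma pk_notout: "pk i \<Longrightarrow> q!i \<in> gV HH - gOut HH"
  using pk_V[of i] by (auto simp: Out_iff)

lemma top_out: "(v,w) \<in> gE HH \<Longrightarrow> lev v = n \<Longrightarrow> w \<in> gOut HH \<and> lev w = Suc n"
  using E_lev[of v w "Suc n"] by (auto simp: Out_iff)

definition stT1 where "stT1 c p \<longleftrightarrow> base p \<and> pk c \<and> q!c \<in> gBob HH \<and> 2 \<le> length p \<and>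
   p!(length p - 1) = cc1 (q!c) \<and> p!(length p - 2) = q!c \<and>
   Ent p (\<lambda>v cl. EK c v cl \<or> (v = q!c \<and> cl = 0)) lev"

definition stT2 where "stT2 c p \<longleftrightarrow> base p \<and> pk c \<and> q!c \<in> gBob HH \<and> 2 \<le> length p \<and>
   p!(length p - 1) = cc2 (q!c) \<and> p!(length p - 2) = q!c \<and>
   Ent p (\<lambda>v cl. EK c v cl \<or> (v = q!c \<and> cl \<le> 1) \<or> (lev v = Suc n \<and> (\<forall>r\<in>PP v. r \<le> c) \<and> v \<noteq> cc2 (q!c))) lev"

definition stTA where "stTA c p \<longleftrightarrow> base p \<and> pk c \<and> q!c \<in> gAlice HH \<and> 2 \<le> length p \<and>
   (q!c, p!(length p - 1)) \<in> gA HH \<and> p!(length p - 2) = q!c \<and>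
   Ent p (\<lambda>v cl. EK c v cl \<or> (v = q!c \<and> cl = 0)) lev"

lemma K_peak_gen: assumes st: "stK m p" and pk1: "pk (m+1)"
  and e: "(q!(m+1), z) \<in> gE HH"
  and lo: "loc_ok HH (q!m) (q!(m+1)) z"
  and xz: "z \<in> gOut HH \<Longrightarrow> x z = 0"
  shows "base (p @ [q!(m+1), z]) \<and> Ent (p @ [q!(m+1), z]) (\<lambda>v cl. EK (m+1) v cl \<or> (v = q!(m+1) \<and> cl = 0)) lev"
proof -
  note d = stK_D[OF st]
  have ne: "p \<noteq> []" using base_ne[OF d(1)] .
  have m1: "m + 1 < length q" using pk_lt[OF pk1] by linarith
  note ka = K_app[OF st m1]
  let ?v = "q!(m+1)"
  let ?p1 = "p @ [?v]"
  have l1: "length ?p1 = length p + 1" "?p1!(length ?p1 - 1) = ?v" "?p1!(length ?p1 - 2) = q!m" "?p1 \<noteq> []"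
    using ne d(4) by (auto simp: nth_append)
  have b1: "base ?p1" and E1: "Ent ?p1 (EK (m+1)) lev" using ka by auto
  have b2: "base (?p1 @ [z])"
  proof (rule base_app1[OF b1])
    show "(?p1!(length ?p1 - 1), z) \<in> gE HH \<or> (z, ?p1!(length ?p1 - 1)) \<in> gE HH" using e l1 by simp
    show "loc_ok HH (?p1!(length ?p1 - 2)) (?p1!(length ?p1 - 1)) z" using lo l1 by simp
  next
    fix k assume k: "k < length ?p1 - 1" "?p1!k = ?p1!(length ?p1 - 1)"
    have "EK (m+1) (?p1!k) (clsw lev ?p1 k)" using Ent_D[OF E1 k(1)] .
    then show "okc (clsw lev ?p1 k) (clsw lev (?p1@[z]) (length ?p1 - 1))"
      using EK_peak[of "m+1" "?p1!k" _ "m+1"] pk1 k(2) l1 by simp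
  next
    show "z \<in> gOut HH \<Longrightarrow> x z = 0" by (rule xz)
    show "length ?p1 = 1 \<Longrightarrow> z = q!1" using ne by simp
  qed
  have lz: "lev z = Suc n" using top_out[OF e] pk_V[OF pk1] by simp
  have ncl: "clsw lev (?p1@[z]) (length ?p1 - 1) = 0"
  proof -
    have "length ?p1 - 1 \<noteq> 0" using ne by simp
    then show ?thesis using cls_app_last[OF l1(4), of lev z] l1 lz pk_V[OF pk1] pk_nb[OF pk1]
      by (simp add: tcl_def)
  qed
  have E2: "Ent (?p1 @ [z]) (\<lambda>v cl. EK (m+1) v cl \<or> (v = q!(m+1) \<and> cl = 0)) lev"
  proof (rule Ent_app1[OF _ l1(4)])
    show "Ent ?p1 (\<lambda>v cl. EK (m+1) v cl \<or> (v = q!(m+1) \<and> cl = 0)) lev" by (rule Ent_mono[OF E1]) simp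
    show "EK (m+1) (?p1!(length ?p1 - 1)) (clsw lev (?p1@[z]) (length ?p1 - 1)) \<or>
      (?p1!(length ?p1 - 1) = q!(m+1) \<and> clsw lev (?p1@[z]) (length ?p1 - 1) = 0)" using ncl l1 by simp
  qed
  show ?thesis using b2 E2 by simp
qed

lemma K_peakB: assumes st: "stK m p" and pk1: "pk (m+1)" and bo: "q!(m+1) \<in> gBob HH"
  shows "stT1 (m+1) (p @ [q!(m+1), cc1 (q!(m+1))])"
proof -
  note d = stK_D[OF st]
  let ?v = "q!(m+1)" and ?z = "cc1 (q!(m+1))"
  have m1: "m + 1 < length q" using pk_lt[OF pk1] by linarith
  have e1: "(?v, ?z) \<in> gB HH 1" by (rule cc1_edge[OF bo])
  have e: "(?v, ?z) \<in> gE HH" using B_E[OF e1] by blast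
  have al: "q!m \<in> gAlice HH" using pk_Bob_nb(1)[OF pk1 bo] by simp
  have lv: "lev ?v = Suc (lev (q!m))" using pk_prev_next(3)[OF pk1] by simp
  have lz: "lev ?z = Suc (lev ?v)" using B_lev[OF e1] .
  have lo: "loc_ok HH (q!m) ?v ?z" unfolding loc_ok_def
  proof (intro allI impI)
    fix t1 t2 assume s1: "steptype HH (q!m) ?v t1" and s2: "steptype HH ?v ?z t2"
    have "t1 = SU" using st_up_Al[OF al s1 lv] .
    moreover have "t2 = RU" using st_up_Bo[OF bo s2 lz] B12 e1 by blast
    ultimately show "(?v \<in> gV HH - gOut HH \<longrightarrow> interior_ok t1 t2) \<and> (?v \<in> gOut HH \<longrightarrow> boundary_ok t1 t2)"
      using pk_notout[OF pk1] by (simp add: interior_ok_def)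
  qed
  have xz: "x ?z = 0" using pB[of "m+1" ?z] m1 pk_out[OF pk1] bo e by simp
  note g = K_peak_gen[OF st pk1 e lo] xz
  have ne: "p \<noteq> []" using base_ne[OF d(1)] .
  show ?thesis unfolding stT1_def using g pk1 bo ne by (simp add: nth_append)
qed

lemma K_peakA: assumes st: "stK m p" and pk1: "pk (m+1)" and al: "q!(m+1) \<in> gAlice HH"
  and eu: "(q!(m+1), u) \<in> gA HH" and xu: "x u = 0"
  shows "stTA (m+1) (p @ [q!(m+1), u])"
proof -
  note d = stK_D[OF st]
  let ?v = "q!(m+1)"
  have e: "(?v, u) \<in> gE HH" using A_E[OF eu] by blast
  have bo: "q!m \<in> gBob HH" using pk_Al_nb(1)[OF pk1 al] by simp
  have lv: "lev ?v = Suc (lev (q!m))" using pk_prev_next(3)[OF pk1] by simp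
  have lz: "lev u = Suc (lev ?v)" using A_lev[OF eu] .
  have lo: "loc_ok HH (q!m) ?v u" unfolding loc_ok_def
  proof (intro allI impI)
    fix t1 t2 assume s1: "steptype HH (q!m) ?v t1" and s2: "steptype HH ?v u t2"
    have "t1 = RU \<or> t1 = LU" using st_up_Bo[OF bo s1 lv] by blast
    moreover have "t2 = SU" using st_up_Al[OF al s2 lz] .
    ultimately show "(?v \<in> gV HH - gOut HH \<longrightarrow> interior_ok t1 t2) \<and> (?v \<in> gOut HH \<longrightarrow> boundary_ok t1 t2)"
      using pk_notout[OF pk1] by (auto simp add: interior_ok_def)
  qed
  note g = K_peak_gen[OF st pk1 e lo] xu
  have ne: "p \<noteq> []" using base_ne[OF d(1)] .
  show ?thesis unfolding stTA_def using g pk1 al ne eu by (simp add: nth_append)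
qed

end

context refine begin

lemma PP_fin: "finite (PP w)"
proof -
  have "PP w \<subseteq> {..<length q}" unfolding PP_def pk_def by auto
  then show ?thesis using finite_subset by blast
qed

lemma PP_max: assumes "c \<in> PP w" shows "Max (PP w) \<in> PP w" "c \<le> Max (PP w)" "\<And>r. r \<in> PP w \<Longrightarrow> r \<le> Max (PP w)"
proof -
  have ne: "PP w \<noteq> {}" using assms by auto
  show "Max (PP w) \<in> PP w" using Max_in[OF PP_fin ne] .
  show "c \<le> Max (PP w)" using Max_ge[OF PP_fin assms] .
  show "\<And>r. r \<in> PP w \<Longrightarrow> r \<le> Max (PP w)" using Max_ge[OF PP_fin] by blast
qed

lemma PP_I: "pk c \<Longrightarrow> (q!c, w) \<in> gE HH \<Longrightarrow> c \<in> PP w" unfolding PP_def by simp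
lemma PP_D: "r \<in> PP w \<Longrightarrow> pk r \<and> (q!r, w) \<in> gE HH" unfolding PP_def by simp

lemma pk_same_Bo: "pk c \<Longrightarrow> pk j \<Longrightarrow> q!c \<in> gBob HH \<Longrightarrow> q!j \<in> gBob HH"
  using same_ownerB pk_V by metis
lemma pk_same_Al: "pk c \<Longrightarrow> pk j \<Longrightarrow> q!c \<in> gAlice HH \<Longrightarrow> q!j \<in> gAlice HH"
  using same_ownerA pk_V by metis

lemma ldBo_only: "(p,w) \<in> gB HH k \<Longrightarrow> (p,w) \<in> gA HH \<Longrightarrow> False"
  using A_Al B_Bo ABd by blast

lemma E_Bo: assumes "(p,w) \<in> gE HH" "p \<in> gBob HH" shows "(p,w) \<in> gB HH 1 \<or> (p,w) \<in> gB HH 2"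
  using E_cases[OF assms(1)] A_Al ABd assms(2) by blast
lemma E_Al: assumes "(p,w) \<in> gE HH" "p \<in> gAlice HH" shows "(p,w) \<in> gA HH"
  using E_cases[OF assms(1)] B_Bo ABd assms(2) by blast

definition P2 where "P2 j v cl \<longleftrightarrow> EK j v cl \<or> (v = q!j \<and> cl \<le> 1) \<or> (lev v = Suc n \<and> (\<forall>r\<in>PP v. r \<le> j) \<and> v \<noteq> cc2 (q!j))"

lemma stT2_alt: "stT2 c p \<longleftrightarrow> base p \<and> pk c \<and> q!c \<in> gBob HH \<and> 2 \<le> length p \<and>
   p!(length p - 1) = cc2 (q!c) \<and> p!(length p - 2) = q!c \<and> Ent p (P2 c) lev"
proof -
  have "P2 c = (\<lambda>v cl. EK c v cl \<or> (v = q!c \<and> cl \<le> 1) \<or> (lev v = Suc n \<and> (\<forall>r\<in>PP v. r \<le> c) \<and> v \<noteq> cc2 (q!c)))"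
    unfolding P2_def by (intro ext) simp
  then show ?thesis unfolding stT2_def by simp
qed

lemma K_exit_gen: assumes b: "base p" and l2: "2 \<le> length p"
  and tl: "p!(length p - 1) = t" and lt: "lev t = Suc n"
  and pv: "lev (p!(length p - 2)) = n"
  and pj: "pk j" and et: "(q!j, t) \<in> gE HH" and mx: "\<And>r. r \<in> PP t \<Longrightarrow> r \<le> j"
  and ty: "((q!j, t) \<in> gB HH 2 \<and> q!j \<in> gBob HH) \<or> ((q!j, t) \<in> gA HH \<and> q!j \<in> gAlice HH)"
  and lo1: "loc_ok HH (p!(length p - 2)) t (q!j)"
  and E: "Ent p P lev" and Pt: "\<And>v cl. P v cl \<Longrightarrow> v \<noteq> t"
  and Pj: "\<And>v cl. P v cl \<Longrightarrow> v = q!j \<Longrightarrow> okc cl 2"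
  and PK: "\<And>v cl. P v cl \<Longrightarrow> EK (j+1) v cl"
  shows "stK (j+1) (p @ [q!j, q!(j+1)])"
proof -
  have ne: "p \<noteq> []" using base_ne[OF b] .
  have j1: "j + 1 < length q" using pk_lt[OF pj] by linarith
  have np: "\<not> pk (j+1)" using pk_nb(2)[OF pj] pk_V[OF pj] unfolding pk_def by auto
  have ljn: "lev (q!j) = n" using pk_V[OF pj] by simp
  have lj1: "Suc (lev (q!(j+1))) = n" using pk_nb(2)[OF pj] .
  have to: "t \<in> gOut HH" using top_out[OF et ljn] by simp
  let ?p1 = "p @ [q!j]"
  have l1: "length ?p1 = length p + 1" "?p1!(length ?p1 - 1) = q!j" "?p1!(length ?p1 - 2) = t" "?p1 \<noteq> []"
    using ne tl by (auto simp: nth_append)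
  have c1: "clsw lev ?p1 (length p - 1) = 3"
  proof -
    have "length p - 1 \<noteq> 0" using l2 by simp
    then show ?thesis using cls_app_last[OF ne, of lev "q!j"] tl lt pv ljn by (simp add: tcl_def)
  qed
  have b1: "base ?p1"
  proof (rule base_app1[OF b])
    show "(p!(length p - 1), q!j) \<in> gE HH \<or> (q!j, p!(length p - 1)) \<in> gE HH" using et tl by simp
    show "loc_ok HH (p!(length p - 2)) (p!(length p - 1)) (q!j)" using lo1 tl by simp
  next
    fix k assume k: "k < length p - 1" "p!k = p!(length p - 1)"
    then show "okc (clsw lev p k) (clsw lev ?p1 (length p - 1))" using Pt[OF Ent_D[OF E k(1)]] tl by simp
  next
    show "q!j \<in> gOut HH \<Longrightarrow> x (q!j) = 0" using ljn by (simp add: Out_iff)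
    show "length p = 1 \<Longrightarrow> q!j = q!1" using l2 by simp
  qed
  have E1: "Ent ?p1 (\<lambda>v cl. P v cl \<or> (v = t \<and> cl = 3)) lev"
    by (rule Ent_app1[OF Ent_mono[OF E] ne]) (use c1 tl in simp_all)
  have c2: "clsw lev (?p1 @ [q!(j+1)]) (length ?p1 - 1) = 2"
  proof -
    have "length ?p1 - 1 \<noteq> 0" using ne by simp
    moreover have "length ?p1 - 2 = length p - 1" using l2 ne by simp
    ultimately show ?thesis using cls_app_last[OF l1(4), of lev "q!(j+1)"] l1 tl lt ljn lj1 by (simp add: tcl_def)
  qed
  have lo2: "loc_ok HH t (q!j) (q!(j+1))" unfolding loc_ok_def
  proof (intro allI impI)
    fix t1 t2 assume s1: "steptype HH t (q!j) t1" and s2: "steptype HH (q!j) (q!(j+1)) t2"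
    have lt': "lev t = Suc (lev (q!j))" using lt ljn by simp
    have lj': "lev (q!j) = Suc (lev (q!(j+1)))" using ljn lj1 by simp
    have vj1: "q!(j+1) \<in> gV HH" using pk_prev_next(2)[OF pj] .
    have nin: "q!j \<in> gV HH - gOut HH" using pk_notout[OF pj] .
    show "(q!j \<in> gV HH - gOut HH \<longrightarrow> interior_ok t1 t2) \<and> (q!j \<in> gOut HH \<longrightarrow> boundary_ok t1 t2)"
    proof (cases "q!j \<in> gBob HH")
      case True
      then have e2: "(q!j, t) \<in> gB HH 2" using ty ABd by blast
      have "t1 = RD" using st_dn_Bo[OF True s1 lt'] B12 e2 by blast
      moreover have "t2 = SD" using st_dn_Al[OF pk_Bob_nb(2)[OF pj True] s2 lj'] .
      ultimately show ?thesis using nin by (simp add: interior_ok_def)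
    next
      case False
      then have al: "q!j \<in> gAlice HH" using ty by blast
      have "t1 = SD" using st_dn_Al[OF al s1 lt'] .
      moreover have "t2 = LD \<or> t2 = RD" using st_dn_Bo[OF pk_Al_nb(2)[OF pj al] s2 lj'] by blast
      ultimately show ?thesis using nin by (auto simp add: interior_ok_def)
    qed
  qed
  have b2: "base (?p1 @ [q!(j+1)])"
  proof (rule base_app1[OF b1])
    show "(?p1!(length ?p1 - 1), q!(j+1)) \<in> gE HH \<or> (q!(j+1), ?p1!(length ?p1 - 1)) \<in> gE HH"
      using q_edge_HH[of "j+1"] j1 l1 by simp
    show "loc_ok HH (?p1!(length ?p1 - 2)) (?p1!(length ?p1 - 1)) (q!(j+1))" using lo2 l1 by simp
  next
    fix k assume k: "k < length ?p1 - 1" "?p1!k = ?p1!(length ?p1 - 1)"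
    have eqj: "?p1!k = q!j" using k(2) l1 by simp
    have "P (?p1!k) (clsw lev ?p1 k) \<or> (?p1!k = t \<and> clsw lev ?p1 k = 3)" using Ent_D[OF E1 k(1)] .
    then show "okc (clsw lev ?p1 k) (clsw lev (?p1 @ [q!(j+1)]) (length ?p1 - 1))"
    proof
      assume "P (?p1!k) (clsw lev ?p1 k)"
      then show ?thesis using Pj eqj c2 by simp
    next
      assume "?p1!k = t \<and> clsw lev ?p1 k = 3"
      then have "t = q!j" using eqj by simp
      then show ?thesis using lt ljn by simp
    qed
  next
    show "q!(j+1) \<in> gOut HH \<Longrightarrow> x (q!(j+1)) = 0" using lj1 by (simp add: Out_iff)
    show "length ?p1 = 1 \<Longrightarrow> q!(j+1) = q!1" using l2 by simp
  qed
  have tK: "EK (j+1) t 3"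
  proof -
    have "\<forall>r\<in>PP t. r < j+1" using mx by (simp add: less_Suc_eq_le)
    then show ?thesis unfolding EK_def using lt by blast
  qed
  have jK: "EK (j+1) (q!j) 2" unfolding EK_def using pj by (intro disjI2 disjI1 exI[of _ j]) simp
  have E2: "Ent (?p1 @ [q!(j+1)]) (EK (j+1)) lev"
  proof (rule Ent_app1[OF _ l1(4)])
    show "Ent ?p1 (EK (j+1)) lev" by (rule Ent_mono[OF E1]) (use PK tK in blast)
    show "EK (j+1) (?p1!(length ?p1 - 1)) (clsw lev (?p1 @ [q!(j+1)]) (length ?p1 - 1))" using jK l1 c2 by simp
  qed
  have eqs: "p @ [q!j, q!(j+1)] = ?p1 @ [q!(j+1)]" by simp
  show ?thesis unfolding stK_def eqs using b2 j1 np E2 ne by (simp add: nth_append)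
qed


lemma T2_gen: assumes b: "base p" and l2: "2 \<le> length p"
  and tl: "p!(length p - 1) = t" and lt: "lev t = Suc n"
  and pv: "lev (p!(length p - 2)) = n"
  and pj: "pk j" and bj: "q!j \<in> gBob HH" and e1: "(q!j, t) \<in> gB HH 1" and mx: "\<And>r. r \<in> PP t \<Longrightarrow> r \<le> j"
  and lo1: "loc_ok HH (p!(length p - 2)) t (q!j)"
  and E: "Ent p P lev" and Pt: "\<And>v cl. P v cl \<Longrightarrow> v \<noteq> t"
  and Pj: "\<And>v cl. P v cl \<Longrightarrow> v = q!j \<Longrightarrow> okc cl 1"
  and PK: "\<And>v cl. P v cl \<Longrightarrow> P2 j v cl"
  shows "stT2 j (p @ [q!j, cc2 (q!j)])"
proof -
  have ne: "p \<noteq> []" using base_ne[OF b] .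
  have j1: "j + 1 < length q" using pk_lt[OF pj] by linarith
  have ljn: "lev (q!j) = n" using pk_V[OF pj] by simp
  have et: "(q!j, t) \<in> gE HH" using B_E[OF e1] by blast
  have to: "t \<in> gOut HH" using top_out[OF et ljn] by simp
  let ?z = "cc2 (q!j)"
  have ez: "(q!j, ?z) \<in> gB HH 2" using cc2_edge[OF bj] .
  have lz: "lev ?z = Suc n" using B_lev[OF ez] ljn by simp
  let ?p1 = "p @ [q!j]"
  have l1: "length ?p1 = length p + 1" "?p1!(length ?p1 - 1) = q!j" "?p1!(length ?p1 - 2) = t" "?p1 \<noteq> []"
    using ne tl by (auto simp: nth_append)
  have c1: "clsw lev ?p1 (length p - 1) = 3"
  proof -
    have "length p - 1 \<noteq> 0" using l2 by simp
    then show ?thesis using cls_app_last[OF ne, of lev "q!j"] tl lt pv ljn by (simp add: tcl_def)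
  qed
  have b1: "base ?p1"
  proof (rule base_app1[OF b])
    show "(p!(length p - 1), q!j) \<in> gE HH \<or> (q!j, p!(length p - 1)) \<in> gE HH" using et tl by simp
    show "loc_ok HH (p!(length p - 2)) (p!(length p - 1)) (q!j)" using lo1 tl by simp
  next
    fix k assume k: "k < length p - 1" "p!k = p!(length p - 1)"
    then show "okc (clsw lev p k) (clsw lev ?p1 (length p - 1))" using Pt[OF Ent_D[OF E k(1)]] tl by simp
  next
    show "q!j \<in> gOut HH \<Longrightarrow> x (q!j) = 0" using ljn by (simp add: Out_iff)
    show "length p = 1 \<Longrightarrow> q!j = q!1" using l2 by simp
  qed
  have E1: "Ent ?p1 (\<lambda>v cl. P v cl \<or> (v = t \<and> cl = 3)) lev"
    by (rule Ent_app1[OF Ent_mono[OF E] ne]) (use c1 tl in simp_all)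
  have c2: "clsw lev (?p1 @ [?z]) (length ?p1 - 1) = 1"
  proof -
    have "length ?p1 - 1 \<noteq> 0" using ne by simp
    moreover have "length ?p1 - 2 = length p - 1" using l2 ne by simp
    ultimately show ?thesis using cls_app_last[OF l1(4), of lev ?z] l1 tl lt ljn lz by (simp add: tcl_def)
  qed
  have lo2: "loc_ok HH t (q!j) ?z" unfolding loc_ok_def
  proof (intro allI impI)
    fix t1 t2 assume s1: "steptype HH t (q!j) t1" and s2: "steptype HH (q!j) ?z t2"
    have lt': "lev t = Suc (lev (q!j))" using lt ljn by simp
    have lz': "lev ?z = Suc (lev (q!j))" using lz ljn by simp
    have nin: "q!j \<in> gV HH - gOut HH" using pk_notout[OF pj] .
    have "t1 = LD" using st_dn_Bo[OF bj s1 lt'] B12 e1 by blast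
    moreover have "t2 = LU" using st_up_Bo[OF bj s2 lz'] B12 ez by blast
    ultimately show "(q!j \<in> gV HH - gOut HH \<longrightarrow> interior_ok t1 t2) \<and> (q!j \<in> gOut HH \<longrightarrow> boundary_ok t1 t2)"
      using nin by (simp add: interior_ok_def)
  qed
  have b2: "base (?p1 @ [?z])"
  proof (rule base_app1[OF b1])
    show "(?p1!(length ?p1 - 1), ?z) \<in> gE HH \<or> (?z, ?p1!(length ?p1 - 1)) \<in> gE HH"
    proof -
      have "(q!j, ?z) \<in> gE HH" using B_E[OF ez] by blast
      then show ?thesis using l1 by simp
    qed
    show "loc_ok HH (?p1!(length ?p1 - 2)) (?p1!(length ?p1 - 1)) ?z" using lo2 l1 by simp
  next
    fix k assume k: "k < length ?p1 - 1" "?p1!k = ?p1!(length ?p1 - 1)"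
    have eqj: "?p1!k = q!j" using k(2) l1 by simp
    have "P (?p1!k) (clsw lev ?p1 k) \<or> (?p1!k = t \<and> clsw lev ?p1 k = 3)" using Ent_D[OF E1 k(1)] .
    then show "okc (clsw lev ?p1 k) (clsw lev (?p1 @ [?z]) (length ?p1 - 1))"
    proof
      assume "P (?p1!k) (clsw lev ?p1 k)"
      then show ?thesis using Pj eqj c2 by simp
    next
      assume "?p1!k = t \<and> clsw lev ?p1 k = 3"
      then have "t = q!j" using eqj by simp
      then show ?thesis using lt ljn by simp
    qed
  next
    have ez': "(q!j, ?z) \<in> gE HH" using B_E[OF ez] by blast
    have jl: "j < length q" using pk_lt[OF pj] by linarith
    show "?z \<in> gOut HH \<Longrightarrow> x ?z = 0" using pB[OF jl pk_out[OF pj] bj ez'] .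
    show "length ?p1 = 1 \<Longrightarrow> ?z = q!1" using l2 by simp
  qed
  have tc1: "t = cc1 (q!j)" using B_E[OF e1] unfolding cc1_def by simp
  have tK: "P2 j t 3" unfolding P2_def
  proof (intro disjI2 conjI ballI)
    show "lev t = Suc n" by (rule lt)
    show "\<And>r. r \<in> PP t \<Longrightarrow> r \<le> j" by (rule mx)
    show "t \<noteq> cc2 (q!j)" using tc1 cc12[OF bj] by simp
  qed
  have jK: "P2 j (q!j) 1" unfolding P2_def by simp
  have E2: "Ent (?p1 @ [?z]) (P2 j) lev"
  proof (rule Ent_app1[OF _ l1(4)])
    show "Ent ?p1 (P2 j) lev" by (rule Ent_mono[OF E1]) (use PK tK in blast)
    show "P2 j (?p1!(length ?p1 - 1)) (clsw lev (?p1 @ [?z]) (length ?p1 - 1))" using jK l1 c2 by simp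
  qed
  have eqs: "p @ [q!j, ?z] = ?p1 @ [?z]" by simp
  show ?thesis unfolding stT2_alt eqs using b2 pj bj E2 ne by (simp add: nth_append)
qed

end

context refine begin

lemma stT1_D: assumes "stT1 c p"
  shows "base p" "pk c" "q!c \<in> gBob HH" "2 \<le> length p" "p!(length p - 1) = cc1 (q!c)" "p!(length p - 2) = q!c"
    "Ent p (\<lambda>v cl. EK c v cl \<or> (v = q!c \<and> cl = 0)) lev"
  using assms unfolding stT1_def by simp_all

lemma stT2_D: assumes "stT2 c p"
  shows "base p" "pk c" "q!c \<in> gBob HH" "2 \<le> length p" "p!(length p - 1) = cc2 (q!c)" "p!(length p - 2) = q!c"
    "Ent p (P2 c) lev"
  using assms unfolding stT2_alt by simp_all

lemma stTA_D: assumes "stTA c p"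
  shows "base p" "pk c" "q!c \<in> gAlice HH" "2 \<le> length p" "(q!c, p!(length p - 1)) \<in> gA HH" "p!(length p - 2) = q!c"
    "Ent p (\<lambda>v cl. EK c v cl \<or> (v = q!c \<and> cl = 0)) lev"
  using assms unfolding stTA_def by simp_all

lemma P0_top: assumes "EK c v cl \<or> (v = q!c \<and> cl = 0)" "pk c" "c \<in> PP t" "lev t = Suc n" shows "v \<noteq> t"
  using assms(1)
proof
  assume "EK c v cl" then show ?thesis using EK_top[of c v cl c t] assms(3,4) by simp
next
  assume "v = q!c \<and> cl = 0" then show ?thesis using pk_V[OF assms(2)] assms(4) by auto
qed

lemma P0_peak: assumes "EK c v cl \<or> (v = q!c \<and> cl = 0)" "c \<le> j" "pk j" "v = q!j" shows "v = q!c \<and> cl = 0"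
  using assms EK_peak[of c v cl j] by auto

lemma P0_K: assumes "EK c v cl \<or> (v = q!c \<and> cl = 0)" "pk c" "c \<le> j" shows "EK (j+1) v cl"
proof -
  have cj: "c < j + 1" "c \<le> j + 1" using assms by auto
  from assms(1) show ?thesis
  proof
    assume "EK c v cl" then show ?thesis using EK_mono cj by blast
  next
    assume "v = q!c \<and> cl = 0"
    then show ?thesis unfolding EK_def using assms(2) cj by (intro disjI2 disjI1 exI[of _ c]) simp
  qed
qed

lemma P2_top: assumes "P2 c v cl" "pk c" "c \<in> PP t" "t = cc2 (q!c)" "lev t = Suc n" shows "v \<noteq> t"
proof -
  have "EK c v cl \<or> (v = q!c \<and> cl \<le> 1) \<or> (lev v = Suc n \<and> (\<forall>r\<in>PP v. r \<le> c) \<and> v \<noteq> cc2 (q!c))"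
    using assms(1) unfolding P2_def .
  then show ?thesis
  proof (elim disjE)
    assume "EK c v cl" then show ?thesis using EK_top[of c v cl c t] assms(3,5) by simp
  next
    assume "v = q!c \<and> cl \<le> 1" then show ?thesis using pk_V[OF assms(2)] assms(5) by auto
  next
    assume "lev v = Suc n \<and> (\<forall>r\<in>PP v. r \<le> c) \<and> v \<noteq> cc2 (q!c)" then show ?thesis using assms(4) by simp
  qed
qed

lemma P2_K: assumes "P2 c v cl" "pk c" shows "EK (c+1) v cl"
proof -
  have "EK c v cl \<or> (v = q!c \<and> cl \<le> 1) \<or> (lev v = Suc n \<and> (\<forall>r\<in>PP v. r \<le> c) \<and> v \<noteq> cc2 (q!c))"
    using assms(1) unfolding P2_def .
  then show ?thesis
  proof (elim disjE)
    assume "EK c v cl" then show ?thesis using EK_mono by simp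
  next
    assume "v = q!c \<and> cl \<le> 1" then show ?thesis unfolding EK_def using assms(2) by (intro disjI2 disjI1 exI[of _ c]) simp
  next
    assume a: "lev v = Suc n \<and> (\<forall>r\<in>PP v. r \<le> c) \<and> v \<noteq> cc2 (q!c)"
    then have "\<forall>r\<in>PP v. r < c + 1" by auto
    then show ?thesis unfolding EK_def using a by blast
  qed
qed

lemma Bo_lev_cc1: "v \<in> gBob HH \<Longrightarrow> lev (cc1 v) = Suc (lev v)" using B_lev[OF cc1_edge] .
lemma Bo_lev_cc2: "v \<in> gBob HH \<Longrightarrow> lev (cc2 v) = Suc (lev v)" using B_lev[OF cc2_edge] .

lemma T1_exit: assumes st: "stT1 c p" and jd: "j = Max (PP (cc1 (q!c)))" and e2: "(q!j, cc1 (q!c)) \<in> gB HH 2"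
  shows "stK (j+1) (p @ [q!j, q!(j+1)]) \<and> c < j"
proof -
  note d = stT1_D[OF st]
  let ?v = "q!c" and ?w = "cc1 (q!c)"
  have e1: "(?v, ?w) \<in> gB HH 1" using cc1_edge[OF d(3)] .
  have ee1: "(?v, ?w) \<in> gE HH" using B_E[OF e1] by blast
  have cP: "c \<in> PP ?w" using PP_I[OF d(2) ee1] .
  have jP1: "j \<in> PP ?w" using PP_max(1)[OF cP] jd by simp
  have jP2: "c \<le> j" using PP_max(2)[OF cP] jd by simp
  note jP = jP1 jP2
  have pj: "pk j" using PP_D[OF jP1] by simp
  have ej: "(q!j, ?w) \<in> gE HH" using PP_D[OF jP1] by simp
  have bj: "q!j \<in> gBob HH" using pk_same_Bo[OF d(2) pj d(3)] .
  have lv: "lev ?v = n" using pk_V[OF d(2)] by simp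
  have ljn: "lev (q!j) = n" using pk_V[OF pj] by simp
  have lw: "lev ?w = Suc n" using Bo_lev_cc1[OF d(3)] lv by simp
  have cj: "c \<noteq> j"
  proof
    assume "c = j"
    then have "(?v, ?w) \<in> gB HH 2" using e2 by simp
    then show False using B12[OF e1] by blast
  qed
  have lo1: "loc_ok HH ?v ?w (q!j)" unfolding loc_ok_def
  proof (intro allI impI)
    fix t1 t2 assume s1: "steptype HH ?v ?w t1" and s2: "steptype HH ?w (q!j) t2"
    have l1: "lev ?w = Suc (lev ?v)" using lv lw by simp
    have l2: "lev ?w = Suc (lev (q!j))" using ljn lw by simp
    have "t1 = RU" using st_up_Bo[OF d(3) s1 l1] B12[OF e1] by blast
    moreover have "t2 = RD" using st_dn_Bo[OF bj s2 l2] B12[OF _ e2] by blast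
    moreover have "?w \<in> gOut HH" using top_out[OF ej ljn] by simp
    ultimately show "(?w \<in> gV HH - gOut HH \<longrightarrow> interior_ok t1 t2) \<and> (?w \<in> gOut HH \<longrightarrow> boundary_ok t1 t2)"
      by (simp add: boundary_ok_def)
  qed
  have "stK (j+1) (p @ [q!j, q!(j+1)])"
  proof (rule K_exit_gen[OF d(1) d(4) d(5) lw _ pj ej _ _ _ d(7)])
    show "lev (p!(length p - 2)) = n" using d(6) lv by simp
    show "\<And>r. r \<in> PP ?w \<Longrightarrow> r \<le> j" using PP_max(3)[OF cP] jd by simp
    show "((q!j, ?w) \<in> gB HH 2 \<and> q!j \<in> gBob HH) \<or> ((q!j, ?w) \<in> gA HH \<and> q!j \<in> gAlice HH)" using e2 bj by simp
    show "loc_ok HH (p!(length p - 2)) ?w (q!j)" using lo1 d(6) by simp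
  next
    fix v cl assume "EK c v cl \<or> (v = q!c \<and> cl = 0)"
    then show "v \<noteq> ?w" using P0_top[OF _ d(2) cP lw] by blast
  next
    fix v cl assume a: "EK c v cl \<or> (v = q!c \<and> cl = 0)" "v = q!j"
    have "v = q!c" using P0_peak[OF a(1) jP(2) pj a(2)] by (rule conjunct1)
    then have "q!c = q!j" using a(2) by simp
    then have "c = j" using pk_inj[OF d(2) pj] by blast
    then show "okc cl 2" using cj by simp
  next
    fix v cl assume a: "EK c v cl \<or> (v = q!c \<and> cl = 0)"
    show "EK (j+1) v cl" using P0_K[OF a d(2) jP(2)] .
  qed
  then show ?thesis using jP(2) cj by simp
qed


lemma T1_turn: assumes st: "stT1 c p" and jd: "j = Max (PP (cc1 (q!c)))" and e1': "(q!j, cc1 (q!c)) \<in> gB HH 1"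
  shows "stT2 c (p @ [q!c, cc2 (q!c)])"
proof -
  note d = stT1_D[OF st]
  let ?v = "q!c" and ?w = "cc1 (q!c)"
  have e1: "(?v, ?w) \<in> gB HH 1" using cc1_edge[OF d(3)] .
  have ee1: "(?v, ?w) \<in> gE HH" using B_E[OF e1] by blast
  have cP: "c \<in> PP ?w" using PP_I[OF d(2) ee1] .
  have jP1: "j \<in> PP ?w" using PP_max(1)[OF cP] jd by simp
  have pj: "pk j" using PP_D[OF jP1] by simp
  have "q!j = ?v" using Bpar[OF e1' e1] .
  then have jc: "j = c" using pk_inj[OF pj d(2)] by blast
  have lv: "lev ?v = n" using pk_V[OF d(2)] by simp
  have lw: "lev ?w = Suc n" using Bo_lev_cc1[OF d(3)] lv by simp
  have lo1: "loc_ok HH ?v ?w ?v" unfolding loc_ok_def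
  proof (intro allI impI)
    fix t1 t2 assume s1: "steptype HH ?v ?w t1" and s2: "steptype HH ?w ?v t2"
    have l1: "lev ?w = Suc (lev ?v)" using lv lw by simp
    have "t1 = RU" using st_up_Bo[OF d(3) s1 l1] B12[OF e1] by blast
    moreover have "t2 = LD" using st_dn_Bo[OF d(3) s2 l1] B12[OF e1] by blast
    moreover have "?w \<in> gOut HH" using top_out[OF ee1 lv] by simp
    ultimately show "(?w \<in> gV HH - gOut HH \<longrightarrow> interior_ok t1 t2) \<and> (?w \<in> gOut HH \<longrightarrow> boundary_ok t1 t2)"
      by (simp add: boundary_ok_def)
  qed
  show ?thesis
  proof (rule T2_gen[OF d(1) d(4) d(5) lw _ d(2) d(3) e1 _ _ d(7)])
    show "lev (p!(length p - 2)) = n" using d(6) lv by simp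
    show "\<And>r. r \<in> PP ?w \<Longrightarrow> r \<le> c" using PP_max(3)[OF cP] jd jc by simp
    show "loc_ok HH (p!(length p - 2)) ?w ?v" using lo1 d(6) by simp
  next
    fix v cl assume "EK c v cl \<or> (v = q!c \<and> cl = 0)"
    then show "v \<noteq> ?w" using P0_top[OF _ d(2) cP lw] by blast
  next
    fix v cl assume a: "EK c v cl \<or> (v = q!c \<and> cl = 0)" "v = q!c"
    have "v = q!c \<and> cl = 0" using P0_peak[OF a(1) _ d(2) a(2)] by simp
    then show "okc cl 1" by (simp add: okc_def)
  next
    fix v cl assume a: "EK c v cl \<or> (v = q!c \<and> cl = 0)"
    then show "P2 c v cl" unfolding P2_def by auto
  qed
qed

lemma T2_exit: assumes st: "stT2 c p" and jd: "j = Max (PP (cc2 (q!c)))" and e2': "(q!j, cc2 (q!c)) \<in> gB HH 2"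
  shows "stK (c+1) (p @ [q!c, q!(c+1)])"
proof -
  note d = stT2_D[OF st]
  let ?v = "q!c" and ?w = "cc2 (q!c)"
  have e2: "(?v, ?w) \<in> gB HH 2" using cc2_edge[OF d(3)] .
  have ee2: "(?v, ?w) \<in> gE HH" using B_E[OF e2] by blast
  have cP: "c \<in> PP ?w" using PP_I[OF d(2) ee2] .
  have jP1: "j \<in> PP ?w" using PP_max(1)[OF cP] jd by simp
  have pj: "pk j" using PP_D[OF jP1] by simp
  have "q!j = ?v" using Bpar[OF e2' e2] .
  then have jc: "j = c" using pk_inj[OF pj d(2)] by blast
  have lv: "lev ?v = n" using pk_V[OF d(2)] by simp
  have lw: "lev ?w = Suc n" using Bo_lev_cc2[OF d(3)] lv by simp
  have lo1: "loc_ok HH ?v ?w ?v" unfolding loc_ok_def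
  proof (intro allI impI)
    fix t1 t2 assume s1: "steptype HH ?v ?w t1" and s2: "steptype HH ?w ?v t2"
    have l1: "lev ?w = Suc (lev ?v)" using lv lw by simp
    have "t1 = LU" using st_up_Bo[OF d(3) s1 l1] B12[OF _ e2] by blast
    moreover have "t2 = RD" using st_dn_Bo[OF d(3) s2 l1] B12[OF _ e2] by blast
    moreover have "?w \<in> gOut HH" using top_out[OF ee2 lv] by simp
    ultimately show "(?w \<in> gV HH - gOut HH \<longrightarrow> interior_ok t1 t2) \<and> (?w \<in> gOut HH \<longrightarrow> boundary_ok t1 t2)"
      by (simp add: boundary_ok_def)
  qed
  show ?thesis
  proof (rule K_exit_gen[OF d(1) d(4) d(5) lw _ d(2) ee2 _ _ _ d(7)])
    show "lev (p!(length p - 2)) = n" using d(6) lv by simp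
    show "\<And>r. r \<in> PP ?w \<Longrightarrow> r \<le> c" using PP_max(3)[OF cP] jd jc by simp
    show "((q!c, ?w) \<in> gB HH 2 \<and> q!c \<in> gBob HH) \<or> ((q!c, ?w) \<in> gA HH \<and> q!c \<in> gAlice HH)" using e2 d(3) by simp
    show "loc_ok HH (p!(length p - 2)) ?w ?v" using lo1 d(6) by simp
  next
    fix v cl assume "P2 c v cl"
    then show "v \<noteq> ?w" using P2_top[OF _ d(2) cP _ lw] by blast
  next
    fix v cl assume a: "P2 c v cl" "v = q!c"
    have "EK c v cl \<or> (v = q!c \<and> cl \<le> 1) \<or> (lev v = Suc n \<and> (\<forall>r\<in>PP v. r \<le> c) \<and> v \<noteq> cc2 (q!c))"
      using a(1) unfolding P2_def .
    then show "okc cl 2"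
    proof (elim disjE)
      assume "EK c v cl" then show ?thesis using EK_peak[of c v cl c] d(2) a(2) by simp
    next
      assume "v = q!c \<and> cl \<le> 1" then show ?thesis by (auto simp: okc_def)
    next
      assume "lev v = Suc n \<and> (\<forall>r\<in>PP v. r \<le> c) \<and> v \<noteq> cc2 (q!c)" then show ?thesis using a(2) lv by simp
    qed
  next
    fix v cl assume "P2 c v cl"
    then show "EK (c+1) v cl" using P2_K[OF _ d(2)] by blast
  qed
qed

lemma T2_chain: assumes st: "stT2 c p" and jd: "j = Max (PP (cc2 (q!c)))" and e1: "(q!j, cc2 (q!c)) \<in> gB HH 1"
  shows "stT2 j (p @ [q!j, cc2 (q!j)]) \<and> c < j"
proof -
  note d = stT2_D[OF st]
  let ?v = "q!c" and ?w = "cc2 (q!c)"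
  have e2: "(?v, ?w) \<in> gB HH 2" using cc2_edge[OF d(3)] .
  have ee2: "(?v, ?w) \<in> gE HH" using B_E[OF e2] by blast
  have cP: "c \<in> PP ?w" using PP_I[OF d(2) ee2] .
  have jP1: "j \<in> PP ?w" using PP_max(1)[OF cP] jd by simp
  have jP2: "c \<le> j" using PP_max(2)[OF cP] jd by simp
  have pj: "pk j" using PP_D[OF jP1] by simp
  have bj: "q!j \<in> gBob HH" using pk_same_Bo[OF d(2) pj d(3)] .
  have cj: "c \<noteq> j"
  proof
    assume "c = j"
    then have "(?v, ?w) \<in> gB HH 1" using e1 by simp
    then show False using B12[OF _ e2] by blast
  qed
  have lv: "lev ?v = n" using pk_V[OF d(2)] by simp
  have ljn: "lev (q!j) = n" using pk_V[OF pj] by simp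
  have lw: "lev ?w = Suc n" using Bo_lev_cc2[OF d(3)] lv by simp
  have lo1: "loc_ok HH ?v ?w (q!j)" unfolding loc_ok_def
  proof (intro allI impI)
    fix t1 t2 assume s1: "steptype HH ?v ?w t1" and s2: "steptype HH ?w (q!j) t2"
    have l1: "lev ?w = Suc (lev ?v)" using lv lw by simp
    have l2: "lev ?w = Suc (lev (q!j))" using ljn lw by simp
    have "t1 = LU" using st_up_Bo[OF d(3) s1 l1] B12[OF _ e2] by blast
    moreover have "t2 = LD" using st_dn_Bo[OF bj s2 l2] B12[OF e1] by blast
    moreover have "?w \<in> gOut HH" using top_out[OF ee2 lv] by simp
    ultimately show "(?w \<in> gV HH - gOut HH \<longrightarrow> interior_ok t1 t2) \<and> (?w \<in> gOut HH \<longrightarrow> boundary_ok t1 t2)"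
      by (simp add: boundary_ok_def)
  qed
  have "stT2 j (p @ [q!j, cc2 (q!j)])"
  proof (rule T2_gen[OF d(1) d(4) d(5) lw _ pj bj e1 _ _ d(7)])
    show "lev (p!(length p - 2)) = n" using d(6) lv by simp
    show "\<And>r. r \<in> PP ?w \<Longrightarrow> r \<le> j" using PP_max(3)[OF cP] jd by simp
    show "loc_ok HH (p!(length p - 2)) ?w (q!j)" using lo1 d(6) by simp
  next
    fix v cl assume "P2 c v cl"
    then show "v \<noteq> ?w" using P2_top[OF _ d(2) cP _ lw] by blast
  next
    fix v cl assume a: "P2 c v cl" "v = q!j"
    have "EK c v cl \<or> (v = q!c \<and> cl \<le> 1) \<or> (lev v = Suc n \<and> (\<forall>r\<in>PP v. r \<le> c) \<and> v \<noteq> cc2 (q!c))"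
      using a(1) unfolding P2_def .
    then show "okc cl 1"
    proof (elim disjE)
      assume "EK c v cl" then show ?thesis using EK_peak[OF _ jP2 pj] a(2) by blast
    next
      assume "v = q!c \<and> cl \<le> 1"
      then have "q!c = q!j" using a(2) by simp
      then show ?thesis using pk_inj[OF d(2) pj] cj by blast
    next
      assume "lev v = Suc n \<and> (\<forall>r\<in>PP v. r \<le> c) \<and> v \<noteq> cc2 (q!c)" then show ?thesis using a(2) ljn by simp
    qed
  next
    fix v cl assume a: "P2 c v cl"
    have "EK c v cl \<or> (v = q!c \<and> cl \<le> 1) \<or> (lev v = Suc n \<and> (\<forall>r\<in>PP v. r \<le> c) \<and> v \<noteq> cc2 (q!c))"
      using a(1) unfolding P2_def .
    then show "P2 j v cl"
    proof (elim disjE)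
      assume "EK c v cl" then show ?thesis unfolding P2_def using EK_mono[OF _ jP2] by blast
    next
      assume b: "v = q!c \<and> cl \<le> 1"
      have "c < j" using jP2 cj by simp
      then have "EK j v cl" unfolding EK_def using b d(2) by (intro disjI2 disjI1 exI[of _ c]) simp
      then show ?thesis unfolding P2_def by blast
    next
      assume b: "lev v = Suc n \<and> (\<forall>r\<in>PP v. r \<le> c) \<and> v \<noteq> cc2 (q!c)"
      have ne: "v \<noteq> cc2 (q!j)"
      proof
        assume vj: "v = cc2 (q!j)"
        have "(q!j, cc2 (q!j)) \<in> gE HH" using B_E[OF cc2_edge[OF bj]] by blast
        then have "j \<in> PP v" using PP_I[OF pj] vj by simp
        then have "j \<le> c" using b by blast
        then show False using jP2 cj by simp
      qed
      have "\<forall>r\<in>PP v. r \<le> j" using b jP2 by auto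
      then show ?thesis unfolding P2_def using b ne by blast
    qed
  qed
  then show ?thesis using jP2 cj by simp
qed

lemma TA_exit: assumes st: "stTA c p" and jd: "j = Max (PP (p!(length p - 1)))"
  shows "stK (j+1) (p @ [q!j, q!(j+1)]) \<and> c \<le> j"
proof -
  note d = stTA_D[OF st]
  let ?v = "q!c" and ?u = "p!(length p - 1)"
  have eu: "(?v, ?u) \<in> gE HH" using A_E[OF d(5)] by blast
  have cP: "c \<in> PP ?u" using PP_I[OF d(2) eu] .
  have jP1: "j \<in> PP ?u" using PP_max(1)[OF cP] jd by simp
  have jP2: "c \<le> j" using PP_max(2)[OF cP] jd by simp
  have pj: "pk j" using PP_D[OF jP1] by simp
  have ej: "(q!j, ?u) \<in> gE HH" using PP_D[OF jP1] by simp
  have aj: "q!j \<in> gAlice HH" using pk_same_Al[OF d(2) pj d(3)] .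
  have ea: "(q!j, ?u) \<in> gA HH" using E_Al[OF ej aj] .
  have lv: "lev ?v = n" using pk_V[OF d(2)] by simp
  have ljn: "lev (q!j) = n" using pk_V[OF pj] by simp
  have lu: "lev ?u = Suc n" using A_lev[OF d(5)] lv by simp
  have lo1: "loc_ok HH ?v ?u (q!j)" unfolding loc_ok_def
  proof (intro allI impI)
    fix t1 t2 assume s1: "steptype HH ?v ?u t1" and s2: "steptype HH ?u (q!j) t2"
    have l1: "lev ?u = Suc (lev ?v)" using lv lu by simp
    have l2: "lev ?u = Suc (lev (q!j))" using ljn lu by simp
    have "t1 = SU" using st_up_Al[OF d(3) s1 l1] .
    moreover have "t2 = SD" using st_dn_Al[OF aj s2 l2] .
    moreover have "?u \<in> gOut HH" using top_out[OF eu lv] by simp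
    ultimately show "(?u \<in> gV HH - gOut HH \<longrightarrow> interior_ok t1 t2) \<and> (?u \<in> gOut HH \<longrightarrow> boundary_ok t1 t2)"
      by (simp add: boundary_ok_def)
  qed
  have "stK (j+1) (p @ [q!j, q!(j+1)])"
  proof (rule K_exit_gen[OF d(1) d(4) refl lu _ pj ej _ _ _ d(7)])
    show "lev (p!(length p - 2)) = n" using d(6) lv by simp
    show "\<And>r. r \<in> PP ?u \<Longrightarrow> r \<le> j" using PP_max(3)[OF cP] jd by simp
    show "((q!j, ?u) \<in> gB HH 2 \<and> q!j \<in> gBob HH) \<or> ((q!j, ?u) \<in> gA HH \<and> q!j \<in> gAlice HH)" using ea aj by simp
    show "loc_ok HH (p!(length p - 2)) ?u (q!j)" using lo1 d(6) by simp
  next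
    fix v cl assume "EK c v cl \<or> (v = q!c \<and> cl = 0)"
    then show "v \<noteq> ?u" using P0_top[OF _ d(2) cP lu] by blast
  next
    fix v cl assume a: "EK c v cl \<or> (v = q!c \<and> cl = 0)" "v = q!j"
    have "v = q!c \<and> cl = 0" using P0_peak[OF a(1) jP2 pj a(2)] .
    then show "okc cl 2" by (simp add: okc_def)
  next
    fix v cl assume a: "EK c v cl \<or> (v = q!c \<and> cl = 0)"
    show "EK (j+1) v cl" using P0_K[OF a d(2) jP2] .
  qed
  then show ?thesis using jP2 by simp
qed

end

context refine begin

lemma q_lev1: "lev (q!1) = 1"
proof -
  have "lev (q!0) = 0" using q_0 rt_lev by simp
  then show ?thesis using q_lstep[of 1] q_len by auto
qed

lemma K_final: assumes st: "stK (length q - 1) p"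
  shows "TP (Suc n) p \<and> (\<forall>k<length p. p!k \<in> gOut HH \<longrightarrow> x (p!k) = 0)"
proof -
  note d = stK_D[OF st]
  let ?L = "length q - 1"
  have L0: "0 < ?L" using q_len by simp
  have b: "base p" by (rule d(1))
  have ne: "p \<noteq> []" and p0: "p!0 = rt" and ed: "edges_ok HH p"
    and lc: "\<forall>k. 0 < k \<and> k < length p - 1 \<longrightarrow> loc_ok HH (p!(k-1)) (p!k) (p!(k+1))"
    and pw: "\<forall>k j. k < j \<and> j < length p - 1 \<longrightarrow> p!k = p!j \<longrightarrow> okc (clsw lev p k) (clsw lev p j)"
    and xo: "\<forall>k < length p. p!k \<in> gOut HH \<longrightarrow> x (p!k) = 0"
    and p1: "2 \<le> length p \<longrightarrow> p!1 = q!1"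
    using b unfolding base_def by simp_all
  have l2: "2 \<le> length p" using d(6) L0 by simp
  have pl: "p!(length p - 1) = rt" using d(4) q_l by simp
  have pl2: "p!(length p - 2) = q!(?L - 1)" using d(7) L0 by simp
  have q1: "p!1 = q!1" using p1 l2 by simp
  have l3: "3 \<le> length p"
  proof (rule ccontr)
    assume "\<not> 3 \<le> length p"
    then have "length p = 2" using l2 by simp
    then have "p!1 = rt" using pl by simp
    then show False using q1 q_lev1 rt_lev by simp
  qed
  have fs: "step HH p 1 SU \<or> step HH p 1 RU"
  proof -
    have "steptype (H n) (q!0) (q!1) SU \<or> steptype (H n) (q!0) (q!1) RU" using q_f q_len unfolding step_def by auto
    then have "steptype HH (p!0) (p!1) SU \<or> steptype HH (p!0) (p!1) RU" using st_mono p0 q_0 q1 by metis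
    then show ?thesis unfolding step_def using l3 by simp
  qed
  have ls: "step HH p (length p - 1) SD \<or> step HH p (length p - 1) RD"
  proof -
    have "steptype (H n) (q!(?L - 1)) (q!?L) SD \<or> steptype (H n) (q!(?L-1)) (q!?L) RD" using q_la q_len unfolding step_def by auto
    then have "steptype HH (p!(length p - 2)) (p!(length p - 1)) SD \<or> steptype HH (p!(length p - 2)) (p!(length p - 1)) RD"
      using st_mono pl pl2 d(4) by metis
    moreover have "length p - 1 - 1 = length p - 2" by simp
    moreover have "1 \<le> length p - 1" "length p - 1 < length p" using l3 by auto
    ultimately show ?thesis unfolding step_def by simp
  qed
  have pw': "\<forall>k j. k < j \<and> j < length p \<longrightarrow> p!k = p!j \<longrightarrow> okc (clsw lev p k) (clsw lev p j)"
  proof (intro allI impI)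
    fix k j assume kj: "k < j \<and> j < length p" and eq: "p!k = p!j"
    show "okc (clsw lev p k) (clsw lev p j)"
    proof (cases "j < length p - 1")
      case True then show ?thesis using pw kj eq by blast
    next
      case False
      have "j < length p" using kj by simp
      then have jj: "j = length p - 1" using False by linarith
      have k1: "k < length p - 1" using kj jj by simp
      have ek: "EK ?L (p!k) (clsw lev p k)" using Ent_D[OF d(8) k1] .
      have "p!k = q!?L" using eq jj d(4) by simp
      then have "okc (clsw lev p k) (clsw lev q ?L)" using EK_kept[OF ek _ d(2) d(3)] by simp
      moreover have "clsw lev q ?L = 2" using L0 unfolding clsw_def by simp
      moreover have "clsw lev p j = 2" using jj l3 unfolding clsw_def by simp
      ultimately show ?thesis by simp
    qed
  qed
  have "TP (Suc n) p" unfolding TP_def groot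
    by (intro conjI ed l3 p0 pl fs ls lc pw')
  then show ?thesis using xo by simp
qed

lemma start: "stK 0 [rt]"
proof -
  have "base [rt]" unfolding base_def edges_ok_def using rt_lev by (simp add: Out_iff)
  moreover have "q \<noteq> []" "0 < length q" using q_len by auto
  ultimately show ?thesis unfolding stK_def Ent_def using q_0 pk_def by simp
qed

definition Fin where "Fin \<longleftrightarrow> (\<exists>p. TP (Suc n) p \<and> (\<forall>k<length p. p!k \<in> gOut HH \<longrightarrow> x (p!k) = 0))"

lemma Max_edge_Bo: assumes "pk c" "q!c \<in> gBob HH" "c \<in> PP w"
  shows "(q!(Max (PP w)), w) \<in> gB HH 1 \<or> (q!(Max (PP w)), w) \<in> gB HH 2"
proof -
  have jP: "Max (PP w) \<in> PP w" using PP_max(1)[OF assms(3)] .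
  have pj: "pk (Max (PP w))" and ej: "(q!(Max (PP w)), w) \<in> gE HH" using PP_D[OF jP] by auto
  have "q!(Max (PP w)) \<in> gBob HH" using pk_same_Bo[OF assms(1) pj assms(2)] .
  then show ?thesis using E_Bo[OF ej] by blast
qed

lemma fin_all: "length q - c = d \<Longrightarrow> (stK c p \<longrightarrow> Fin) \<and> (stT2 c p \<longrightarrow> Fin) \<and> (stT1 c p \<longrightarrow> Fin) \<and> (stTA c p \<longrightarrow> Fin)"
proof (induction d arbitrary: c p rule: less_induct)
  case (less d)
  have IH: "\<And>c' p'. length q - c' < d \<Longrightarrow> (stK c' p' \<longrightarrow> Fin) \<and> (stT2 c' p' \<longrightarrow> Fin) \<and> (stT1 c' p' \<longrightarrow> Fin) \<and> (stTA c' p' \<longrightarrow> Fin)"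
    using less.IH by blast
  have T2: "Fin" if st: "stT2 c p'" for p'
  proof -
    note d = stT2_D[OF st]
    have cl: "c < length q" using pk_lt[OF d(2)] by linarith
    let ?w = "cc2 (q!c)"
    have cP: "c \<in> PP ?w" using PP_I[OF d(2)] B_E[OF cc2_edge[OF d(3)]] by blast
    let ?j = "Max (PP ?w)"
    have jl: "?j < length q" using PP_D[OF PP_max(1)[OF cP]] pk_lt by fastforce
    show Fin
    proof (cases "(q!?j, ?w) \<in> gB HH 2")
      case True
      have "stK (c+1) (p' @ [q!c, q!(c+1)])" using T2_exit[OF st refl True] .
      moreover have "length q - (c+1) < d" using less.prems cl by simp
      ultimately show Fin using IH by blast
    next
      case False
      then have "(q!?j, ?w) \<in> gB HH 1" using Max_edge_Bo[OF d(2) d(3) cP] by blast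
      then have r: "stT2 ?j (p' @ [q!?j, cc2 (q!?j)]) \<and> c < ?j" using T2_chain[OF st refl] by blast
      moreover have "length q - ?j < d"
      proof -
        have "c < ?j" using r by simp
        then show ?thesis using less.prems jl by linarith
      qed
      ultimately show Fin using IH by blast
    qed
  qed
  have T1: "stT1 c p \<longrightarrow> Fin"
  proof
    assume st: "stT1 c p"
    note d = stT1_D[OF st]
    let ?w = "cc1 (q!c)"
    have cP: "c \<in> PP ?w" using PP_I[OF d(2)] B_E[OF cc1_edge[OF d(3)]] by blast
    let ?j = "Max (PP ?w)"
    have jl: "?j < length q - 1" using PP_D[OF PP_max(1)[OF cP]] pk_lt by fastforce
    show Fin
    proof (cases "(q!?j, ?w) \<in> gB HH 2")
      case True
      have r: "stK (?j+1) (p @ [q!?j, q!(?j+1)]) \<and> c < ?j" using T1_exit[OF st refl True] .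
      moreover have "length q - (?j+1) < d"
      proof -
        have "c < ?j" using r by simp
        then show ?thesis using less.prems jl by linarith
      qed
      ultimately show Fin using IH by blast
    next
      case False
      then have "(q!?j, ?w) \<in> gB HH 1" using Max_edge_Bo[OF d(2) d(3) cP] by blast
      then have "stT2 c (p @ [q!c, cc2 (q!c)])" using T1_turn[OF st refl] by blast
      then show Fin using T2 by blast
    qed
  qed
  have TA: "stTA c p \<longrightarrow> Fin"
  proof
    assume st: "stTA c p"
    note d = stTA_D[OF st]
    let ?u = "p!(length p - 1)"
    have cP: "c \<in> PP ?u" using PP_I[OF d(2)] A_E[OF d(5)] by blast
    let ?j = "Max (PP ?u)"
    have jl: "?j < length q - 1" using PP_D[OF PP_max(1)[OF cP]] pk_lt by fastforce
    have r: "stK (?j+1) (p @ [q!?j, q!(?j+1)]) \<and> c \<le> ?j" using TA_exit[OF st refl] .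
    have "length q - (?j+1) < d"
    proof -
      have "c \<le> ?j" using r by simp
      then show ?thesis using less.prems jl by linarith
    qed
    then show Fin using IH r by blast
  qed
  have K: "stK c p \<longrightarrow> Fin"
  proof
    assume st: "stK c p"
    note d = stK_D[OF st]
    show Fin
    proof (cases "c = length q - 1")
      case True then show ?thesis using K_final st unfolding Fin_def by blast
    next
      case False
      then have c1: "c + 1 < length q" using d(2) by linarith
      have lt: "length q - (c+1) < d" using less.prems c1 by linarith
      show ?thesis
      proof (cases "pk (c+1)")
        case False
        then show ?thesis using K_step[OF st c1 False] IH[OF lt] by blast
      next
        case True
        have ow: "q!(c+1) \<in> gAlice HH \<or> q!(c+1) \<in> gBob HH" using pk_owner[OF True] .
        then show ?thesis
        proof
          assume bo: "q!(c+1) \<in> gBob HH"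
          show ?thesis using K_peakB[OF st True bo] IH[OF lt] by blast
        next
          assume al: "q!(c+1) \<in> gAlice HH"
          obtain u where u: "(q!(c+1), u) \<in> gA HH" "x u = 0" using pA[of "c+1"] c1 pk_out[OF True] al by blast
          show ?thesis using K_peakA[OF st True al u] IH[OF lt] by blast
        qed
      qed
    qed
  qed
  show ?case using K T2 T1 TA by blast
qed

theorem refine_main: "Fin"
  using fin_all[OF refl, of 0 "[rt]"] start by blast

end

context tg begin

definition xr :: "nat \<Rightarrow> ('a \<times> 'b \<Rightarrow> nat) \<Rightarrow> 'a \<times> 'b \<Rightarrow> nat" where
  "xr n x v = (if (v \<in> gAlice (H (Suc n)) \<and> (\<exists>u. (v,u) \<in> gA (H (Suc n)) \<and> x u = 0)) \<or>
                 (v \<in> gBob (H (Suc n)) \<and> (\<forall>u. (v,u) \<in> gE (H (Suc n)) \<longrightarrow> x u = 0)) then 0 else 1)"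

lemma E_Al_t: assumes "(p,w) \<in> gE (H m)" "p \<in> gAlice (H m)" shows "(p,w) \<in> gA (H m)"
proof -
  have "(p,w) \<in> gA (H m) \<or> (p,w) \<in> gB (H m) 1 \<or> (p,w) \<in> gB (H m) 2" using E_cases[OF assms(1)] .
  moreover have nb: "p \<notin> gBob (H m)" using ABd[OF assms(2)] by blast
  moreover have "(p,w) \<notin> gB (H m) 1"
  proof
    assume "(p,w) \<in> gB (H m) 1" then have "p \<in> gBob (H m)" by (rule B_Bo)
    then show False using nb by simp
  qed
  moreover have "(p,w) \<notin> gB (H m) 2"
  proof
    assume "(p,w) \<in> gB (H m) 2" then have "p \<in> gBob (H m)" by (rule B_Bo)
    then show False using nb by simp
  qed
  ultimately show ?thesis by blast
qed

lemma reach_sub: "v \<in> reach (H n) s \<Longrightarrow> v \<in> reach (H (Suc n)) s"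
proof (induction rule: reach.induct)
  case root
  have "groot (H n) = groot (H (Suc n))" by (simp add: groot)
  then show ?case using reach.root[of "H (Suc n)" s] by simp
next
  case (alice v)
  have "v \<in> gAlice (H (Suc n))" using mono_Al[OF alice.hyps(2)] .
  then show ?case using reach.alice[OF alice.IH] by blast
next
  case (bob v w)
  have "v \<in> gBob (H (Suc n))" using mono_Bo[OF bob.hyps(2)] .
  moreover have "(v,w) \<in> gE (H (Suc n))" using mono_E[OF bob.hyps(3)] .
  ultimately show ?case using reach.bob[OF bob.IH] by blast
qed

lemma aw_transfer: assumes "alice_wins (H (Suc n)) x" shows "alice_wins (H n) (xr n x)"
proof -
  obtain s where s1: "\<forall>v\<in>gAlice (H (Suc n)). (v, s v) \<in> gE (H (Suc n))"
    and s2: "\<forall>v\<in>reach (H (Suc n)) s. v \<in> gOut (H (Suc n)) \<longrightarrow> x v = 0"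
    using assms unfolding alice_wins_def by (elim exE conjE)
  have val: "\<forall>v\<in>gAlice (H n). (v, s v) \<in> gE (H n)"
  proof
    fix v assume v: "v \<in> gAlice (H n)"
    then have e: "(v, s v) \<in> gE (H (Suc n))" using s1 mono_Al by blast
    have "lev v < n" using Al_V[OF v] by simp
    then have "lev (s v) \<le> n" using E_lev[OF e] by simp
    then show "(v, s v) \<in> gE (H n)" using restr_E[OF e] by simp
  qed
  have win: "\<forall>v\<in>reach (H n) s. v \<in> gOut (H n) \<longrightarrow> xr n x v = 0"
  proof (intro ballI impI)
    fix v assume r: "v \<in> reach (H n) s" and o: "v \<in> gOut (H n)"
    have r': "v \<in> reach (H (Suc n)) s" using reach_sub[OF r] .
    have o1: "v \<in> gV (H n)" using o unfolding Out_iff by blast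
    have o2: "lev v = n" using o unfolding Out_iff by blast
    have vV: "v \<in> gV (H (Suc n))" "lev v = n" using mono_V[OF o1] o2 by simp_all
    then have "v \<in> gAlice (H (Suc n)) \<or> v \<in> gBob (H (Suc n))" using owner by simp
    then show "xr n x v = 0"
    proof
      assume al: "v \<in> gAlice (H (Suc n))"
      have e: "(v, s v) \<in> gE (H (Suc n))" using s1 al by blast
      have rs: "s v \<in> reach (H (Suc n)) s" using reach.alice[OF r' al] .
      have "s v \<in> gOut (H (Suc n))" using E_lev[OF e] vV by (simp add: Out_iff)
      then have "x (s v) = 0" using s2 rs by blast
      moreover have "(v, s v) \<in> gA (H (Suc n))" using E_Al_t[OF e al] .
      ultimately have c: "(v \<in> gAlice (H (Suc n)) \<and> (\<exists>u. (v,u) \<in> gA (H (Suc n)) \<and> x u = 0)) \<or>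
                 (v \<in> gBob (H (Suc n)) \<and> (\<forall>u. (v,u) \<in> gE (H (Suc n)) \<longrightarrow> x u = 0))" using al by blast
      show ?thesis unfolding xr_def by (subst if_P[OF c]) (rule refl)
    next
      assume bo: "v \<in> gBob (H (Suc n))"
      have "\<forall>u. (v,u) \<in> gE (H (Suc n)) \<longrightarrow> x u = 0"
      proof (intro allI impI)
        fix u assume e: "(v,u) \<in> gE (H (Suc n))"
        have "u \<in> reach (H (Suc n)) s" using reach.bob[OF r' bo e] .
        moreover have "u \<in> gOut (H (Suc n))" using E_lev[OF e] vV by (simp add: Out_iff)
        ultimately show "x u = 0" using s2 by blast
      qed
      then have c: "(v \<in> gAlice (H (Suc n)) \<and> (\<exists>u. (v,u) \<in> gA (H (Suc n)) \<and> x u = 0)) \<or>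
                 (v \<in> gBob (H (Suc n)) \<and> (\<forall>u. (v,u) \<in> gE (H (Suc n)) \<longrightarrow> x u = 0))" using bo by blast
      show ?thesis unfolding xr_def by (subst if_P[OF c]) (rule refl)
    qed
  qed
  show ?thesis unfolding alice_wins_def by (rule exI[of _ s]) (use val win in blast)
qed

lemma if01: "(if C then (0::nat) else 1) = 0 \<Longrightarrow> C" by (cases C) auto

lemma xr0: "xr n x v = 0 \<Longrightarrow> (v \<in> gAlice (H (Suc n)) \<and> (\<exists>u. (v,u) \<in> gA (H (Suc n)) \<and> x u = 0)) \<or>
                 (v \<in> gBob (H (Suc n)) \<and> (\<forall>u. (v,u) \<in> gE (H (Suc n)) \<longrightarrow> x u = 0))"
  unfolding xr_def by (rule if01)

lemma step_lift: assumes "1 \<le> n" and a: "alice_wins (H (Suc n)) x"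
  and ih: "\<exists>q. TP n q \<and> (\<forall>k<length q. q!k \<in> gOut (H n) \<longrightarrow> xr n x (q!k) = 0)"
  shows "\<exists>p. TP (Suc n) p \<and> (\<forall>k<length p. p!k \<in> gOut (H (Suc n)) \<longrightarrow> x (p!k) = 0)"
proof -
  obtain q where tq: "TP n q" and pr: "\<forall>k<length q. q!k \<in> gOut (H n) \<longrightarrow> xr n x (q!k) = 0" using ih by blast
  have R: "refine lt D1 D2 n q x"
    unfolding refine_def refine_axioms_def
  proof (intro conjI allI impI)
    show "tg D1 D2" by (rule tg_axioms)
    show "1 \<le> n" by (rule assms(1))
    show "TP n q" by (rule tq)
  next
    fix k assume k: "k < length q" "q!k \<in> gOut (H n)" "q!k \<in> gAlice (H (Suc n))"
    have "xr n x (q!k) = 0" using pr k by blast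
    then show "\<exists>u. (q!k, u) \<in> gA (H (Suc n)) \<and> x u = 0" using xr0 k(3) ABd by blast
  next
    fix k u assume k: "k < length q" "q!k \<in> gOut (H n)" "q!k \<in> gBob (H (Suc n))" "(q!k, u) \<in> gE (H (Suc n))"
    have "xr n x (q!k) = 0" using pr k by blast
    then show "x u = 0" using xr0 k(3,4) ABd by blast
  qed
  show ?thesis using refine.refine_main[OF R] unfolding refine.Fin_def[OF R] .
qed

end

context tg begin

lemma base1: assumes aw: "alice_wins (H 1) x" shows "\<exists>p. TP 1 p \<and> (\<forall>k<length p. p!k \<in> gOut (H 1) \<longrightarrow> x (p!k) = 0)"
proof -
  obtain s where s1: "\<forall>v\<in>gAlice (H 1). (v, s v) \<in> gE (H 1)"
    and s2: "\<forall>v\<in>reach (H 1) s. v \<in> gOut (H 1) \<longrightarrow> x v = 0"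
    using aw unfolding alice_wins_def by (elim exE conjE)
  let ?r = "groot (H 1)"
  have rV: "?r \<in> gV (H 1)" using root_V .
  have rl: "lev ?r = 0" using root_lev .
  have rR: "?r \<in> reach (H 1) s" by (rule reach.root)
  have rno: "?r \<notin> gOut (H 1)" using rl by (simp add: Out_iff)
  have rin: "?r \<in> gV (H 1) - gOut (H 1)" using rV rno by simp
  show ?thesis
  proof (cases lt)
    case True
    have ra: "?r \<in> gAlice (H 1)" using rV rl True unfolding gV gAlice by simp
    let ?u = "s ?r"
    have e: "(?r, ?u) \<in> gE (H 1)" using s1 ra by blast
    have ea: "(?r, ?u) \<in> gA (H 1)" using E_Al_t[OF e ra] .
    have lu: "lev ?u = Suc (lev ?r)" using E_lev[OF e] by simp
    have uo: "?u \<in> gOut (H 1)" using E_lev[OF e] rl by (simp add: Out_iff)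
    have xu: "x ?u = 0" using s2 reach.alice[OF rR ra] uo by blast
    have ne: "?u \<noteq> ?r" using lu by auto
    let ?p = "[?r, ?u, ?r]"
    have ed: "edges_ok (H 1) ?p" unfolding edges_ok_def
    proof (intro allI impI)
      fix k assume "1 \<le> k \<and> k < length ?p"
      then have "k = 1 \<or> k = 2" by auto
      then show "(?p!(k-1), ?p!k) \<in> gE (H 1) \<or> (?p!k, ?p!(k-1)) \<in> gE (H 1)" using e by auto
    qed
    have lo: "loc_ok (H 1) ?r ?u ?r" unfolding loc_ok_def
    proof (intro allI impI)
      fix t1 t2 assume a1: "steptype (H 1) ?r ?u t1" and a2: "steptype (H 1) ?u ?r t2"
      have "t1 = SU" using st_up_Al[OF ra a1 lu] .
      moreover have "t2 = SD" using st_dn_Al[OF ra a2 lu] .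
      ultimately show "(?u \<in> gV (H 1) - gOut (H 1) \<longrightarrow> interior_ok t1 t2) \<and> (?u \<in> gOut (H 1) \<longrightarrow> boundary_ok t1 t2)"
        using uo by (simp add: boundary_ok_def)
    qed
    have loc: "\<forall>k. 0 < k \<and> k < length ?p - 1 \<longrightarrow> loc_ok (H 1) (?p!(k-1)) (?p!k) (?p!(k+1))"
    proof (intro allI impI)
      fix k assume "0 < k \<and> k < length ?p - 1"
      then have "k = 1" by auto
      then show "loc_ok (H 1) (?p!(k-1)) (?p!k) (?p!(k+1))" using lo by simp
    qed
    have pw: "\<forall>k j. k < j \<and> j < length ?p \<longrightarrow> ?p!k = ?p!j \<longrightarrow> okc (clsw lev ?p k) (clsw lev ?p j)"
    proof (intro allI impI)
      fix k j assume kj: "k < j \<and> j < length ?p" and eq: "?p!k = ?p!j"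
      have "(k = 0 \<and> j = 1) \<or> (k = 0 \<and> j = 2) \<or> (k = 1 \<and> j = 2)" using kj by auto
      then show "okc (clsw lev ?p k) (clsw lev ?p j)" using eq ne by (auto simp: clsw_def okc_def)
    qed
    have st1: "step (H 1) ?p 1 SU" unfolding step_def using ea by simp
    have st2: "step (H 1) ?p (length ?p - 1) SD" unfolding step_def using ea by (simp add: numeral_2_eq_2)
    have "TP 1 ?p" unfolding TP_def using ed loc pw st1 st2 by simp
    moreover have "\<forall>k<length ?p. ?p!k \<in> gOut (H 1) \<longrightarrow> x (?p!k) = 0"
    proof (intro allI impI)
      fix k assume "k < length ?p" "?p!k \<in> gOut (H 1)"
      then have "k = 0 \<or> k = 1 \<or> k = 2" by auto
      then show "x (?p!k) = 0" using xu rno \<open>?p!k \<in> gOut (H 1)\<close> by auto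
    qed
    ultimately show ?thesis by blast
  next
    case False
    have rb: "?r \<in> gBob (H 1)" using rV rl False unfolding gV gBob by simp
    let ?w1 = "(fst ?r, dch D2 (snd ?r) 1)" and ?w2 = "(fst ?r, dch D2 (snd ?r) 2)"
    have e1: "(?r, ?w1) \<in> gB (H 1) 1" using childB[OF rb, of 1] by simp
    have e2: "(?r, ?w2) \<in> gB (H 1) 2" using childB[OF rb, of 2] by simp
    have ee1: "(?r, ?w1) \<in> gE (H 1)" using B_E[OF e1] by blast
    have ee2: "(?r, ?w2) \<in> gE (H 1)" using B_E[OF e2] by blast
    have l1: "lev ?w1 = Suc (lev ?r)" using E_lev[OF ee1] by simp
    have l2: "lev ?w2 = Suc (lev ?r)" using E_lev[OF ee2] by simp
    have o1: "?w1 \<in> gOut (H 1)" using E_lev[OF ee1] rl by (simp add: Out_iff)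
    have o2: "?w2 \<in> gOut (H 1)" using E_lev[OF ee2] rl by (simp add: Out_iff)
    have x1: "x ?w1 = 0" using s2 reach.bob[OF rR rb ee1] o1 by blast
    have x2: "x ?w2 = 0" using s2 reach.bob[OF rR rb ee2] o2 by blast
    have n12: "?w1 \<noteq> ?w2"
    proof
      assume "?w1 = ?w2"
      then have "(?r, ?w1) \<in> gB (H 1) 2" using e2 by simp
      then show False using B12[OF e1] by blast
    qed
    have nr1: "?w1 \<noteq> ?r" using l1 by auto
    have nr2: "?w2 \<noteq> ?r" using l2 by auto
    let ?p = "[?r, ?w1, ?r, ?w2, ?r]"
    have ed: "edges_ok (H 1) ?p" unfolding edges_ok_def
    proof (intro allI impI)
      fix k assume "1 \<le> k \<and> k < length ?p"
      then have "k = 1 \<or> k = 2 \<or> k = 3 \<or> k = 4" by auto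
      then show "(?p!(k-1), ?p!k) \<in> gE (H 1) \<or> (?p!k, ?p!(k-1)) \<in> gE (H 1)" using ee1 ee2 by auto
    qed
    have lo1: "loc_ok (H 1) ?r ?w1 ?r" unfolding loc_ok_def
    proof (intro allI impI)
      fix t1 t2 assume a1: "steptype (H 1) ?r ?w1 t1" and a2: "steptype (H 1) ?w1 ?r t2"
      have "t1 = RU" using st_up_Bo[OF rb a1 l1] B12[OF e1] by blast
      moreover have "t2 = LD" using st_dn_Bo[OF rb a2 l1] B12[OF e1] by blast
      ultimately show "(?w1 \<in> gV (H 1) - gOut (H 1) \<longrightarrow> interior_ok t1 t2) \<and> (?w1 \<in> gOut (H 1) \<longrightarrow> boundary_ok t1 t2)"
        using o1 by (simp add: boundary_ok_def)
    qed
    have lo2: "loc_ok (H 1) ?w1 ?r ?w2" unfolding loc_ok_def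
    proof (intro allI impI)
      fix t1 t2 assume a1: "steptype (H 1) ?w1 ?r t1" and a2: "steptype (H 1) ?r ?w2 t2"
      have "t1 = LD" using st_dn_Bo[OF rb a1 l1] B12[OF e1] by blast
      moreover have "t2 = LU" using st_up_Bo[OF rb a2 l2] B12[OF _ e2] by blast
      ultimately show "(?r \<in> gV (H 1) - gOut (H 1) \<longrightarrow> interior_ok t1 t2) \<and> (?r \<in> gOut (H 1) \<longrightarrow> boundary_ok t1 t2)"
        using rin by (simp add: interior_ok_def)
    qed
    have lo3: "loc_ok (H 1) ?r ?w2 ?r" unfolding loc_ok_def
    proof (intro allI impI)
      fix t1 t2 assume a1: "steptype (H 1) ?r ?w2 t1" and a2: "steptype (H 1) ?w2 ?r t2"
      have "t1 = LU" using st_up_Bo[OF rb a1 l2] B12[OF _ e2] by blast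
      moreover have "t2 = RD" using st_dn_Bo[OF rb a2 l2] B12[OF _ e2] by blast
      ultimately show "(?w2 \<in> gV (H 1) - gOut (H 1) \<longrightarrow> interior_ok t1 t2) \<and> (?w2 \<in> gOut (H 1) \<longrightarrow> boundary_ok t1 t2)"
        using o2 by (simp add: boundary_ok_def)
    qed
    have loc: "\<forall>k. 0 < k \<and> k < length ?p - 1 \<longrightarrow> loc_ok (H 1) (?p!(k-1)) (?p!k) (?p!(k+1))"
    proof (intro allI impI)
      fix k assume "0 < k \<and> k < length ?p - 1"
      then have "k = 1 \<or> k = 2 \<or> k = 3" by auto
      then show "loc_ok (H 1) (?p!(k-1)) (?p!k) (?p!(k+1))" using lo1 lo2 lo3 by (auto simp: numeral_eq_Suc)
    qed
    have c2: "clsw lev ?p 2 = 1" using l1 l2 rl unfolding clsw_def tcl_def by (simp add: numeral_eq_Suc)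
    have pw: "\<forall>k j. k < j \<and> j < length ?p \<longrightarrow> ?p!k = ?p!j \<longrightarrow> okc (clsw lev ?p k) (clsw lev ?p j)"
    proof (intro allI impI)
      fix k j assume kj: "k < j \<and> j < length ?p" and eq: "?p!k = ?p!j"
      have "(k = 0 \<and> j = 2) \<or> (k = 0 \<and> j = 4) \<or> (k = 2 \<and> j = 4)"
      proof -
        have "k < 5" "j < 5" "k < j" using kj by auto
        then have "k = 0 \<or> k = 1 \<or> k = 2 \<or> k = 3" "j = 1 \<or> j = 2 \<or> j = 3 \<or> j = 4" by auto
        then show ?thesis using eq n12 nr1 nr2 \<open>k < j\<close> by (auto simp: numeral_eq_Suc)
      qed
      then show "okc (clsw lev ?p k) (clsw lev ?p j)" using c2 by (auto simp: clsw_def okc_def)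
    qed
    have st1: "step (H 1) ?p 1 RU" unfolding step_def using e1 by simp
    have st2: "step (H 1) ?p (length ?p - 1) RD" unfolding step_def using e2 by (simp add: numeral_eq_Suc)
    have "TP 1 ?p" unfolding TP_def using ed loc pw st1 st2 by simp
    moreover have "\<forall>k<length ?p. ?p!k \<in> gOut (H 1) \<longrightarrow> x (?p!k) = 0"
    proof (intro allI impI)
      fix k assume k: "k < length ?p" "?p!k \<in> gOut (H 1)"
      then have "k = 0 \<or> k = 1 \<or> k = 2 \<or> k = 3 \<or> k = 4" by auto
      then show "x (?p!k) = 0" using x1 x2 rno k(2) by (auto simp: numeral_eq_Suc)
    qed
    ultimately show ?thesis by blast
  qed
qed

lemma main_ind: "1 \<le> n \<Longrightarrow> alice_wins (H n) x \<Longrightarrow> \<exists>p. TP n p \<and> (\<forall>k<length p. p!k \<in> gOut (H n) \<longrightarrow> x (p!k) = 0)"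
proof (induction n arbitrary: x)
  case 0 then show ?case by simp
next
  case (Suc n)
  show ?case
  proof (cases "n = 0")
    case True then show ?thesis using base1 Suc.prems by simp
  next
    case False
    then have n1: "1 \<le> n" by simp
    have "alice_wins (H n) (xr n x)" using aw_transfer[OF Suc.prems(2)] .
    then have ih: "\<exists>q. TP n q \<and> (\<forall>k<length q. q!k \<in> gOut (H n) \<longrightarrow> xr n x (q!k) = 0)" using Suc.IH n1 by blast
    show ?thesis using step_lift[OF n1 Suc.prems(2) ih] .
  qed
qed

theorem main: "1 \<le> n \<Longrightarrow> alice_wins (H n) x \<Longrightarrow> toom_present (H n) x"
  using main_ind[of n x] toom_TP2 unfolding toom_present_def by blast

end

lemma tg_T: "tg Tree N2"
  unfolding tg_def Tree_def N2_def by auto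

lemma tg_N: "tg N2 N2"
  unfolding tg_def N2_def by auto


theorem theorem10:
  fixes n :: nat
  assumes "n \<ge> 1"
  shows "(\<forall>x :: nat list \<times> (nat \<times> nat) \<Rightarrow> nat.
            (\<forall>v \<in> gOut (mkgame True False Tree N2 n). x v \<in> {0,1}) \<longrightarrow>
            alice_wins (mkgame True False Tree N2 n) x \<longrightarrow>
            toom_present (mkgame True False Tree N2 n) x)
       \<and> (\<forall>x :: nat list \<times> (nat \<times> nat) \<Rightarrow> nat.
            (\<forall>v \<in> gOut (mkgame False True Tree N2 n). x v \<in> {0,1}) \<longrightarrow>
            alice_wins (mkgame False True Tree N2 n) x \<longrightarrow>
            toom_present (mkgame False True Tree N2 n) x)
       \<and> (\<forall>x :: (nat \<times> nat) \<times> (nat \<times> nat) \<Rightarrow> nat.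
            (\<forall>v \<in> gOut (mkgame True False N2 N2 n). x v \<in> {0,1}) \<longrightarrow>
            alice_wins (mkgame True False N2 N2 n) x \<longrightarrow>
            toom_present (mkgame True False N2 N2 n) x)
       \<and> (\<forall>x :: (nat \<times> nat) \<times> (nat \<times> nat) \<Rightarrow> nat.
            (\<forall>v \<in> gOut (mkgame False True N2 N2 n). x v \<in> {0,1}) \<longrightarrow>
            alice_wins (mkgame False True N2 N2 n) x \<longrightarrow>
            toom_present (mkgame False True N2 N2 n) x)"
proof -
  have A: "alice_wins (mkgame True False Tree N2 n) x \<Longrightarrow> toom_present (mkgame True False Tree N2 n) x" for x
    using tg.main[OF tg_T, where lt=True, of n x] assms by simp
  have B: "alice_wins (mkgame False True Tree N2 n) x \<Longrightarrow> toom_present (mkgame False True Tree N2 n) x" for x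
    using tg.main[OF tg_T, where lt=False, of n x] assms by simp
  have C: "alice_wins (mkgame True False N2 N2 n) x \<Longrightarrow> toom_present (mkgame True False N2 N2 n) x" for x
    using tg.main[OF tg_N, where lt=True, of n x] assms by simp
  have D: "alice_wins (mkgame False True N2 N2 n) x \<Longrightarrow> toom_present (mkgame False True N2 N2 n) x" for x
    using tg.main[OF tg_N, where lt=False, of n x] assms by simp
  show ?thesis using A B C D by blast
qed

end
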